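(* Let $f_1,\dots,f_N:\mathbb{R}^n\to\mathbb{R}$ satisfy (H1) and (H2) stated in the context, and let $(x_k)$ be the sequence generated by Algorithm X described in the context. If $\bar x$ is an accumulation point of $(x_k)$, then $\bar x$ is a stationary point of $\Phi$, i.e. $\Phi'(\bar x;d)\ge0$ for all $d\in\mathbb{R}^n$.
   Context: (H1): there is $M\in\mathbb{R}$ with $f_j(x)\ge M$ for all $x\in\mathbb{R}^n$ and $1\le j\le N$. (H2): each $f_j\in C^1(\mathbb{R}^n)$ and there is a modulus of continuity $w$ (increasing $w:[0,\infty)\to[0,\infty)$, $w(0)=0$, continuous at $0$) with $\|\nabla f_j(x)-\nabla f_j(y)\|\le w(\|x-y\|)$ for all $x,y$ and $j$. Let $\Phi(x)=\max_{1\le j\le N}f_j(x)$, and $g'(x;d)=\lim_{t\to0^+}\frac{g(x+td)-g(x)}{t}$ denotes the directional derivative. Algorithm X: set $x_0=0$, $c=\sigma=\tfrac12$. At iteration $k=0,1,2,\dots$: let $G\in\mathbb{R}^{N\times n}$ have $j$-th row $\nabla f_j(x_k)^T$, $f=(f_1(x_k),\dots,f_N(x_k))^T$; let $\lambda$ be a solution of $\min_\lambda(\tfrac12\lambda^TGG^T\lambda-f^T\lambda)$ subject to $\sum_i\lambda_i=1$, $\lambda_i\ge0$; set $p_k=-G^T\lambda$, and $d_k=0$ if $p_k=0$, otherwise $d_k=p_k/\|p_k\|$. If $d_k=0$ set $\alpha_k=1$; otherwise $\alpha_k=\sigma^j$ with $j$ the smallest nonnegative integer such that $\Phi(x_k+\sigma^jd_k)<\Phi(x_k)+c\sigma^j\Phi'(x_k;d_k)$.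 Set $x_{k+1}=x_k+\alpha_kd_k$. *)

theory Defs
  imports "HOL-Analysis.Analysis"
begin

definition Phi :: "(nat \<Rightarrow> 'a \<Rightarrow> real) \<Rightarrow> nat \<Rightarrow> 'a \<Rightarrow> real" where
  "Phi f N x = Max ((\<lambda>j. f j x) ` {1..N})"

definition dirderiv :: "('a::real_normed_vector \<Rightarrow> real) \<Rightarrow> 'a \<Rightarrow> 'a \<Rightarrow> real" where
  "dirderiv g x d = Lim (at_right 0) (\<lambda>t. (g (x + t *\<^sub>R d) - g x) / t)"

definition simplexN :: "nat \<Rightarrow> (nat \<Rightarrow> real) set" where
  "simplexN N = {l. (\<forall>j\<in>{1..N}. 0 \<le> l j) \<and> (\<Sum>j=1..N. l j) = 1}"

text \<open>QP objective 1/2 lambda^T G G^T lambda - f^T lambda at the point x, written out: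
  G^T lambda = sum_j lambda_j grad f_j(x).\<close>
definition qp_obj :: "(nat \<Rightarrow> 'a \<Rightarrow> real) \<Rightarrow> (nat \<Rightarrow> 'a \<Rightarrow> 'a::real_inner) \<Rightarrow> nat \<Rightarrow> 'a
    \<Rightarrow> (nat \<Rightarrow> real) \<Rightarrow> real" where
  "qp_obj f gf N x l =
     1/2 * ((\<Sum>j=1..N. l j *\<^sub>R gf j x) \<bullet> (\<Sum>j=1..N. l j *\<^sub>R gf j x))
     - (\<Sum>j=1..N. f j x * l j)"

text \<open>Armijo test with c = sigma = 1/2 for step sigma^j in direction d at x.\<close>
definition armijo :: "(nat \<Rightarrow> 'a \<Rightarrow> real) \<Rightarrow> nat \<Rightarrow> 'a::real_normed_vector \<Rightarrow> 'a \<Rightarrow> nat \<Rightarrow> bool" where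
  "armijo f N x d j \<longleftrightarrow>
     Phi f N (x + ((1/2::real) ^ j) *\<^sub>R d)
       < Phi f N x + (1/2) * ((1/2::real) ^ j) * dirderiv (Phi f N) x d"

text \<open>One iteration of Algorithm X: x' is a possible successor of x (for some solution
  lambda of the QP; the QP solution need not be unique).\<close>
definition algX_step :: "(nat \<Rightarrow> 'a \<Rightarrow> real) \<Rightarrow> (nat \<Rightarrow> 'a \<Rightarrow> 'a::real_inner) \<Rightarrow> nat
    \<Rightarrow> 'a \<Rightarrow> 'a \<Rightarrow> bool" where
  "algX_step f gf N x x' \<longleftrightarrow>
     (\<exists>l. l \<in> simplexN N \<and> (\<forall>\<mu>\<in>simplexN N. qp_obj f gf N x l \<le> qp_obj f gf N x \<mu>) \<and>
        (let p = - (\<Sum>j=1..N. l j *\<^sub>R gf j x);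
             d = (if p = 0 then 0 else (1 / norm p) *\<^sub>R p)
         in if d = 0 then x' = x + 1 *\<^sub>R d
            else (\<exists>j. armijo f N x d j \<and> (\<forall>i<j. \<not> armijo f N x d i)
                     \<and> x' = x + ((1/2::real) ^ j) *\<^sub>R d)))"

end

theory Submission
  imports Defs
begin

lemma Max_img_le:
  assumes "finite I" "I \<noteq> {}" "\<And>j. j \<in> I \<Longrightarrow> a j \<le> B"
  shows "Max (a ` I) \<le> B"
  using assms by (subst Max_le_iff) auto

lemma Max_img_ge:
  assumes "finite I" "j \<in> I"
  shows "a j \<le> Max (a ` I)"
  using assms by (intro Max_ge) auto

lemma Max_img_ex:
  assumes "finite I" "I \<noteq> {}"
  shows "\<exists>j\<in>I. Max (a ` I) = a j"
proof -
  have "Max (a ` I) \<in> a ` I" using assms by (intro Max_in) auto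
  then show ?thesis by auto
qed

lemma Max_img_diff:
  fixes a b :: "'i \<Rightarrow> real"
  assumes "finite I" "I \<noteq> {}" "\<And>j. j \<in> I \<Longrightarrow> a j \<le> b j + e"
  shows "Max (a ` I) \<le> Max (b ` I) + e"
proof -
  have "\<And>j. j \<in> I \<Longrightarrow> a j \<le> Max (b ` I) + e"
    using assms Max_img_ge[of I _ b] by (meson add_right_mono order_trans)
  then show ?thesis using Max_img_le[OF assms(1,2)] by blast
qed

lemma tendsto_Max_img:
  fixes F :: "'i \<Rightarrow> 'x \<Rightarrow> real"
  assumes "finite I" "I \<noteq> {}" "\<And>j. j \<in> I \<Longrightarrow> ((F j) \<longlongrightarrow> L j) net"
  shows "((\<lambda>x. Max ((\<lambda>j. F j x) ` I)) \<longlongrightarrow> Max (L ` I)) net"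
  using assms
proof (induction I rule: finite_ne_induct)
  case (singleton a)
  then show ?case by simp
next
  case (insert a I)
  have eq: "\<And>x. Max ((\<lambda>j. F j x) ` insert a I) = max (F a x) (Max ((\<lambda>j. F j x) ` I))"
    using insert by (simp add: Max_insert)
  have eq2: "Max (L ` insert a I) = max (L a) (Max (L ` I))"
    using insert by (simp add: Max_insert)
  show ?case unfolding eq eq2
    by (intro tendsto_max) (use insert in auto)
qed

locale axs =
  fixes f :: "nat \<Rightarrow> real ^ 'n \<Rightarrow> real"
    and gf :: "nat \<Rightarrow> real ^ 'n \<Rightarrow> real ^ 'n"
    and N :: nat and w :: "real \<Rightarrow> real"
  assumes N: "N \<ge> 1"
    and grad: "\<And>j y. j \<in> {1..N} \<Longrightarrow> (f j has_derivative (\<lambda>h. gf j y \<bullet> h)) (at y)"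
    and w_mono: "mono_on {0..} w"
    and w_nonneg: "\<And>t. t \<ge> 0 \<Longrightarrow> w t \<ge> 0"
    and w0: "w 0 = 0"
    and w_cont: "continuous (at 0 within {0..}) w"
    and H2: "\<And>j y z. j \<in> {1..N} \<Longrightarrow> norm (gf j y - gf j z) \<le> w (norm (y - z))"
    and C1: "\<And>j. j \<in> {1..N} \<Longrightarrow> continuous_on UNIV (gf j)"
begin

lemma I_fin: "finite {1..N}" and I_ne: "{1..N} \<noteq> {}"
  using N by auto

lemma wmono: "0 \<le> a \<Longrightarrow> a \<le> b \<Longrightarrow> w a \<le> w b"
  using w_mono by (auto simp: mono_on_def)

lemma w_small: "e > 0 \<Longrightarrow> \<exists>d>0. \<forall>t. 0 \<le> t \<longrightarrow> t < d \<longrightarrow> w t < e"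
proof -
  assume e: "e > 0"
  from w_cont[unfolded continuous_within_eps_delta] e
  obtain d where "d > 0" "\<forall>x'\<in>{0..}. dist x' 0 < d \<longrightarrow> dist (w x') (w 0) < e"
    by blast
  then show ?thesis using w0 by (intro exI[of _ d]) (auto simp: dist_real_def)
qed

lemma w_tendsto:
  assumes "\<And>k. t k \<ge> 0" "t \<longlonglongrightarrow> 0"
  shows "(\<lambda>k. w (t k)) \<longlonglongrightarrow> 0"
proof (rule LIMSEQ_I)
  fix e :: real assume "e > 0"
  then obtain d where d: "d > 0" "\<forall>t. 0 \<le> t \<longrightarrow> t < d \<longrightarrow> w t < e" using w_small by blast
  from LIMSEQ_D[OF assms(2) d(1)] obtain K where "\<forall>k\<ge>K. norm (t k - 0) < d" by blast
  then show "\<exists>K. \<forall>k\<ge>K. norm (w (t k) - 0) < e"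
    using d assms(1) w_nonneg by (intro exI[of _ K]) auto
qed

lemma taylor:
  assumes j: "j \<in> {1..N}"
  shows "\<bar>f j y - f j x - gf j x \<bullet> (y - x)\<bar> \<le> norm (y - x) * w (norm (y - x))"
proof -
  have "norm (f j y - f j x - (\<lambda>h. gf j x \<bullet> h) (y - x)) \<le> norm (y - x) * w (norm (y - x))"
  proof (rule differentiable_bound_linearization[where S="closed_segment x y" and f'="\<lambda>z h. gf j z \<bullet> h"])
    show "\<And>t. t \<in> {0..1} \<Longrightarrow> x + t *\<^sub>R (y - x) \<in> closed_segment x y"
      by (auto simp: closed_segment_def algebra_simps intro!: exI[of _ "_::real"])
    show "\<And>z. z \<in> closed_segment x y \<Longrightarrow> (f j has_derivative (\<lambda>h. gf j z \<bullet> h)) (at z within closed_segment x y)"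
      using grad[OF j] has_derivative_at_withinI by blast
    show "x \<in> closed_segment x y" by simp
    fix z assume z: "z \<in> closed_segment x y"
    have nz: "norm (z - x) \<le> norm (y - x)"
      using z using dist_in_closed_segment[OF z] by (simp add: dist_norm norm_minus_commute)
    have "onorm ((\<lambda>h. gf j z \<bullet> h) - (\<lambda>h. gf j x \<bullet> h)) \<le> norm (gf j z - gf j x)"
      by (rule onorm_le) (auto simp: inner_diff_left[symmetric] intro: Cauchy_Schwarz_ineq2)
    also have "\<dots> \<le> w (norm (z - x))" using H2[OF j] by blast
    also have "\<dots> \<le> w (norm (y - x))" using nz by (intro wmono) auto
    finally show "onorm ((\<lambda>h. gf j z \<bullet> h) - (\<lambda>h. gf j x \<bullet> h)) \<le> w (norm (y - x))" .
  qed
  then show ?thesis by simp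
qed

abbreviation Ph where "Ph \<equiv> Phi f N"
definition Act where "Act x = {j\<in>{1..N}. f j x = Ph x}"
definition DA where "DA x d = Max ((\<lambda>j. gf j x \<bullet> d) ` Act x)"

lemma Ph_ge: "j \<in> {1..N} \<Longrightarrow> f j x \<le> Ph x"
  unfolding Phi_def by (rule Max_img_ge[OF I_fin])

lemma Ph_ex: "\<exists>j\<in>{1..N}. Ph x = f j x"
  unfolding Phi_def by (rule Max_img_ex[OF I_fin I_ne])

lemma Ph_le: "(\<And>j. j \<in> {1..N} \<Longrightarrow> f j x \<le> B) \<Longrightarrow> Ph x \<le> B"
  unfolding Phi_def by (rule Max_img_le[OF I_fin I_ne])

lemma Act_fin: "finite (Act x)" unfolding Act_def by auto
lemma Act_ne: "Act x \<noteq> {}" using Ph_ex[of x] unfolding Act_def by force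
lemma Act_sub: "Act x \<subseteq> {1..N}" unfolding Act_def by auto

lemma DA_ge: "j \<in> Act x \<Longrightarrow> gf j x \<bullet> d \<le> DA x d"
  unfolding DA_def by (rule Max_img_ge[OF Act_fin])

lemma DA_ex: "\<exists>j\<in>Act x. DA x d = gf j x \<bullet> d"
  unfolding DA_def by (rule Max_img_ex[OF Act_fin Act_ne])

lemma w_right: "c \<ge> 0 \<Longrightarrow> ((\<lambda>t. c * w (t * c)) \<longlongrightarrow> 0) (at_right (0::real))"
proof -
  assume c: "c \<ge> 0"
  have "((\<lambda>t. w (t * c)) \<longlongrightarrow> 0) (at_right (0::real))"
  proof (rule tendstoI)
    fix e :: real assume "e > 0"
    then obtain d where d: "d > 0" "\<forall>t. 0 \<le> t \<longrightarrow> t < d \<longrightarrow> w t < e" using w_small by blast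
    show "\<forall>\<^sub>F t in at_right 0. dist (w (t * c)) 0 < e"
      unfolding eventually_at_right_field
    proof (intro exI[of _ "d / (c + 1)"] conjI allI impI)
      show "0 < d / (c + 1)" using d c by simp
      fix t :: real assume t: "0 < t" "t < d / (c + 1)"
      have "t * c \<le> t * (c + 1)" using t by simp
      also have "\<dots> < d" using t c by (simp add: field_simps)
      finally have "w (t * c) < e" using d t c by simp
      moreover have "w (t * c) \<ge> 0" using t c by (intro w_nonneg) simp
      ultimately show "dist (w (t * c)) 0 < e" by (simp add: dist_real_def)
    qed
  qed
  then show ?thesis using tendsto_mult_left[of _ 0 _ c] by simp
qed

lemma dir_lower:
  assumes "t \<ge> 0"
  shows "Ph (x + t *\<^sub>R d) \<ge> Ph x + t * DA x d - t * (norm d * w (t * norm d))"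
proof -
  obtain j where j: "j \<in> Act x" "DA x d = gf j x \<bullet> d" using DA_ex by blast
  have jI: "j \<in> {1..N}" and fj: "f j x = Ph x" using j unfolding Act_def by auto
  have "\<bar>f j (x + t *\<^sub>R d) - f j x - gf j x \<bullet> (x + t *\<^sub>R d - x)\<bar>
      \<le> norm (x + t *\<^sub>R d - x) * w (norm (x + t *\<^sub>R d - x))" by (rule taylor[OF jI])
  then have "f j (x + t *\<^sub>R d) \<ge> Ph x + t * DA x d - t * (norm d * w (t * norm d))"
    using assms j fj by (simp add: mult.assoc)
  then show ?thesis using Ph_ge[OF jI, of "x + t *\<^sub>R d"] by linarith
qed

lemma dir_upper:
  "\<forall>\<^sub>F t in at_right 0. Ph (x + t *\<^sub>R d) \<le> Ph x + t * DA x d + t * (norm d * w (t * norm d))"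
proof -
  have ev: "\<forall>\<^sub>F t in at_right 0. \<forall>j\<in>{1..N}. f j x + t * (gf j x \<bullet> d) \<le> Ph x + t * DA x d"
  proof (rule eventually_ball_finite[OF I_fin], intro ballI)
    fix j assume jI: "j \<in> {1..N}"
    show "\<forall>\<^sub>F t in at_right 0. f j x + t * (gf j x \<bullet> d) \<le> Ph x + t * DA x d"
    proof (cases "j \<in> Act x")
      case True
      then have "f j x = Ph x" "gf j x \<bullet> d \<le> DA x d" using DA_ge unfolding Act_def by auto
      then show ?thesis unfolding eventually_at_right_field
        by (intro exI[of _ 1]) (auto intro: mult_left_mono)
    next
      case False
      then have gap: "f j x < Ph x" using Ph_ge[OF jI, of x] jI unfolding Act_def by auto
      define c where "c = \<bar>gf j x \<bullet> d - DA x d\<bar> + 1"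
      have c: "c > 0" unfolding c_def by simp
      show ?thesis unfolding eventually_at_right_field
      proof (intro exI[of _ "(Ph x - f j x) / c"] conjI allI impI)
        show "0 < (Ph x - f j x) / c" using gap c by simp
        fix t :: real assume t: "0 < t" "t < (Ph x - f j x) / c"
        have "t * (gf j x \<bullet> d - DA x d) \<le> t * c" unfolding c_def using t by (intro mult_left_mono) auto
        also have "\<dots> < Ph x - f j x" using t c by (simp add: field_simps)
        finally show "f j x + t * (gf j x \<bullet> d) \<le> Ph x + t * DA x d" by (simp add: algebra_simps)
      qed
    qed
  qed
  have ev2: "\<forall>\<^sub>F t in at_right (0::real). t > 0" by (simp add: eventually_at_right_less)
  show ?thesis using ev ev2
  proof eventually_elim
    case (elim t)
    show ?case
    proof (rule Ph_le)
      fix j assume jI: "j \<in> {1..N}"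
      have "\<bar>f j (x + t *\<^sub>R d) - f j x - gf j x \<bullet> (x + t *\<^sub>R d - x)\<bar>
        \<le> norm (x + t *\<^sub>R d - x) * w (norm (x + t *\<^sub>R d - x))" by (rule taylor[OF jI])
      then have "f j (x + t *\<^sub>R d) \<le> f j x + t * (gf j x \<bullet> d) + t * (norm d * w (t * norm d))"
        using elim by (simp add: mult.assoc)
      moreover have "f j x + t * (gf j x \<bullet> d) \<le> Ph x + t * DA x d"
        using elim(1) jI by blast
      ultimately show "f j (x + t *\<^sub>R d) \<le> Ph x + t * DA x d + t * (norm d * w (t * norm d))"
        by linarith
    qed
  qed
qed

lemma dirderiv_eq: "dirderiv Ph x d = DA x d"
proof -
  let ?Q = "\<lambda>t. (Ph (x + t *\<^sub>R d) - Ph x) / t"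
  have "((\<lambda>t. ?Q t - DA x d) \<longlongrightarrow> 0) (at_right 0)"
  proof (rule Lim_null_comparison[OF _ w_right[of "norm d"]])
    have ev2: "\<forall>\<^sub>F t in at_right (0::real). t > 0" by (simp add: eventually_at_right_less)
    show "\<forall>\<^sub>F t in at_right 0. norm (?Q t - DA x d) \<le> norm d * w (t * norm d)"
      using dir_upper[of x d] ev2
    proof eventually_elim
      case (elim t)
      have lo: "Ph (x + t *\<^sub>R d) \<ge> Ph x + t * DA x d - t * (norm d * w (t * norm d))"
        using dir_lower[of t x d] elim by simp
      have "?Q t - DA x d = (Ph (x + t *\<^sub>R d) - Ph x - t * DA x d) / t"
        using elim by (simp add: diff_divide_distrib)
      moreover have "\<bar>Ph (x + t *\<^sub>R d) - Ph x - t * DA x d\<bar> \<le> t * (norm d * w (t * norm d))"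
        using lo elim by linarith
      moreover have "\<bar>(Ph (x + t *\<^sub>R d) - Ph x - t * DA x d) / t\<bar> = \<bar>Ph (x + t *\<^sub>R d) - Ph x - t * DA x d\<bar> / t"
        using elim by simp
      ultimately show ?case using elim by (simp add: pos_divide_le_eq mult.commute)
    qed
  qed simp
  then have "(?Q \<longlongrightarrow> DA x d) (at_right 0)" by (simp add: LIM_zero_iff)
  then show ?thesis unfolding dirderiv_def by (intro tendsto_Lim) auto
qed

end

lemma aux_nonneg:
  fixes X Y :: real
  assumes "\<And>s. 0 < s \<Longrightarrow> s \<le> 1 \<Longrightarrow> 0 \<le> s * X + s^2 * Y" "Y \<ge> 0"
  shows "X \<ge> 0"
proof (rule ccontr)
  assume "\<not> X \<ge> 0"
  then have X: "X < 0" by simp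
  define s where "s = min 1 (- X / (2 * (Y + 1)))"
  have "0 < - X / (2 * (Y + 1))" using X assms(2) by (intro divide_pos_pos) auto
  then have s0: "0 < s" "s \<le> 1" unfolding s_def by auto
  have "s * Y \<le> (- X / (2 * (Y + 1))) * Y" unfolding s_def using assms(2)
    by (intro mult_right_mono) auto
  also have "\<dots> \<le> - X / 2"
    using X assms(2) by (simp add: field_simps mult_left_mono)
  finally have "X + s * Y < 0" using X by linarith
  then have "s * (X + s * Y) < 0" using s0 by (simp add: mult_pos_neg)
  moreover have "s * (X + s * Y) = s * X + s^2 * Y" by (simp add: algebra_simps power2_eq_square)
  ultimately show False using assms(1)[OF s0] by linarith
qed

context axs begin

definition hq where "hq x q = Max ((\<lambda>j. f j x + gf j x \<bullet> q) ` {1..N}) + 1/2 * (q \<bullet> q)"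

definition qpopt where "qpopt x l \<longleftrightarrow> l \<in> simplexN N \<and> (\<forall>\<mu>\<in>simplexN N. qp_obj f gf N x l \<le> qp_obj f gf N x \<mu>)"

lemma qp_K:
  assumes opt: "qpopt x l" and j: "j \<in> {1..N}"
  defines "P \<equiv> (\<Sum>i=1..N. l i *\<^sub>R gf i x)"
  shows "f j x + gf j x \<bullet> (- P) \<le> (\<Sum>i=1..N. f i x * l i) - P \<bullet> P"
proof -
  let ?F = "\<Sum>i=1..N. f i x * l i"
  have l: "l \<in> simplexN N" and lmin: "\<And>\<mu>. \<mu> \<in> simplexN N \<Longrightarrow> qp_obj f gf N x l \<le> qp_obj f gf N x \<mu>"
    using opt unfolding qpopt_def by auto
  define X where "X = P \<bullet> (gf j x - P) - (f j x - ?F)"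
  define Y where "Y = 1/2 * ((gf j x - P) \<bullet> (gf j x - P))"
  have "0 \<le> s * X + s^2 * Y" if s: "0 < s" "s \<le> 1" for s
  proof -
    define \<mu> where "\<mu> = (\<lambda>i. (1 - s) * l i + (if i = j then s else 0))"
    have sG: "(\<Sum>i=1..N. \<mu> i *\<^sub>R gf i x) = (1 - s) *\<^sub>R P + s *\<^sub>R gf j x"
      unfolding \<mu>_def P_def using j
      by (simp add: scaleR_add_left sum.distrib scaleR_sum_right if_distrib[of "\<lambda>c. c *\<^sub>R _"] cong: if_cong)
    have "(\<Sum>i=1..N. f i x * \<mu> i) = (\<Sum>i=1..N. (1 - s) * (f i x * l i) + (if i = j then s * f j x else 0))"
      by (rule sum.cong) (auto simp: \<mu>_def algebra_simps)
    also have "\<dots> = (1 - s) * ?F + s * f j x"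
      using j by (simp add: sum.distrib sum_distrib_left[symmetric] sum.delta)
    finally have sF: "(\<Sum>i=1..N. f i x * \<mu> i) = (1 - s) * ?F + s * f j x" .
    have s1: "(\<Sum>i=1..N. \<mu> i) = (1 - s) * (\<Sum>i=1..N. l i) + s"
      unfolding \<mu>_def using j by (simp add: sum.distrib sum_distrib_left)
    have "\<mu> \<in> simplexN N"
      using l s s1 unfolding simplexN_def \<mu>_def by auto
    then have "qp_obj f gf N x l \<le> qp_obj f gf N x \<mu>" by (rule lmin)
    then have "1/2 * (P \<bullet> P) - ?F \<le> 1/2 * (((1 - s) *\<^sub>R P + s *\<^sub>R gf j x) \<bullet> ((1 - s) *\<^sub>R P + s *\<^sub>R gf j x)) - ((1 - s) * ?F + s * f j x)"
      unfolding qp_obj_def sG sF P_def by simp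
    moreover have "(1 - s) *\<^sub>R P + s *\<^sub>R gf j x = P + s *\<^sub>R (gf j x - P)"
      by (simp add: algebra_simps)
    moreover have "(P + s *\<^sub>R (gf j x - P)) \<bullet> (P + s *\<^sub>R (gf j x - P))
        = P \<bullet> P + 2 * s * (P \<bullet> (gf j x - P)) + s^2 * ((gf j x - P) \<bullet> (gf j x - P))"
      by (simp add: inner_add_left inner_add_right inner_commute power2_eq_square algebra_simps)
    ultimately show ?thesis unfolding X_def Y_def by (simp add: algebra_simps)
  qed
  moreover have "Y \<ge> 0" unfolding Y_def by simp
  ultimately have "X \<ge> 0" by (rule aux_nonneg)
  then show ?thesis unfolding X_def by (simp add: inner_diff_right inner_commute algebra_simps)
qed

lemma simplex_comb_le:
  assumes l: "l \<in> simplexN N" and a: "\<And>j. j \<in> {1..N} \<Longrightarrow> a j \<le> M"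
  shows "(\<Sum>j=1..N. a j * l j) \<le> M"
proof -
  have "(\<Sum>j=1..N. a j * l j) \<le> (\<Sum>j=1..N. M * l j)"
    using l a unfolding simplexN_def by (intro sum_mono mult_right_mono) auto
  also have "\<dots> = M" using l unfolding simplexN_def by (simp add: sum_distrib_left[symmetric])
  finally show ?thesis .
qed

lemma qp_K2:
  assumes opt: "qpopt x l" and j: "j \<in> {1..N}"
  defines "p \<equiv> - (\<Sum>i=1..N. l i *\<^sub>R gf i x)"
  shows "f j x + gf j x \<bullet> p \<le> Ph x - p \<bullet> p"
proof -
  have "(\<Sum>i=1..N. f i x * l i) \<le> Ph x"
    using opt Ph_ge unfolding qpopt_def by (intro simplex_comb_le) auto
  then show ?thesis using qp_K[OF opt j] unfolding p_def by simp
qed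

lemma qp_SC:
  assumes opt: "qpopt x l"
  defines "p \<equiv> - (\<Sum>i=1..N. l i *\<^sub>R gf i x)"
  shows "hq x q \<ge> hq x p + 1/2 * ((q - p) \<bullet> (q - p))"
proof -
  let ?F = "\<Sum>i=1..N. f i x * l i"
  have l: "l \<in> simplexN N" using opt unfolding qpopt_def by auto
  have "Max ((\<lambda>j. f j x + gf j x \<bullet> p) ` {1..N}) \<le> ?F - p \<bullet> p"
    using qp_K[OF opt] unfolding p_def by (intro Max_img_le[OF I_fin I_ne]) auto
  then have hp: "hq x p \<le> ?F - 1/2 * (p \<bullet> p)" unfolding hq_def by simp
  have "(\<Sum>j=1..N. (f j x + gf j x \<bullet> q) * l j) \<le> Max ((\<lambda>j. f j x + gf j x \<bullet> q) ` {1..N})"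
    using l by (intro simplex_comb_le) (auto intro: Max_img_ge[OF I_fin])
  moreover have "(\<Sum>j=1..N. (f j x + gf j x \<bullet> q) * l j) = ?F + (\<Sum>j=1..N. l j * (gf j x \<bullet> q))"
    by (simp add: sum.distrib[symmetric] algebra_simps)
  moreover have "p \<bullet> q = - (\<Sum>j=1..N. l j * (gf j x \<bullet> q))"
    unfolding p_def by (simp add: inner_sum_left)
  ultimately have "hq x q \<ge> ?F - p \<bullet> q + 1/2 * (q \<bullet> q)" unfolding hq_def by simp
  moreover have "(q - p) \<bullet> (q - p) = q \<bullet> q - 2 * (p \<bullet> q) + p \<bullet> p"
    by (simp add: inner_diff_left inner_diff_right inner_commute)
  ultimately show ?thesis using hp by (simp add: algebra_simps)
qed

end

lemma FA:
  fixes r t G e h cz cJ aJ fzx fJx fJy gJ gz wt P :: real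
  assumes r: "r > 0" and t: "t > 0" and G: "G \<ge> 1" and h: "h > 0" "h \<le> cz" "cz \<le> G"
    and cJG: "\<bar>cJ\<bar> \<le> G" and gJG: "\<bar>gJ\<bar> \<le> G" and wt: "0 \<le> wt" "wt \<le> e"
    and e: "e > 0" "e \<le> 1/2" "e \<le> h/25" "e \<le> (h / (8*G)) * h / 13" "e \<le> h / (G + 9)"
    and t2: "t \<le> 2*r + e*r" and t4: "t \<le> 4*r"
    and act: "fJx \<le> fzx"
    and F10: "\<bar>fzx - (P + r*cz)\<bar> \<le> e*r"
    and F1J: "\<bar>fJx - (P + aJ + r*cJ)\<bar> \<le> e*r"
    and F2J: "\<bar>fJy - (P + aJ + (r - t)*cJ)\<bar> \<le> e*r"
    and aJ: "aJ \<le> 0" "aJ < 0 \<Longrightarrow> aJ < - r*(4*G+5)" "aJ = 0 \<Longrightarrow> cJ \<ge> h"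
    and F3: "\<bar>gJ + cJ\<bar> \<le> e" "\<bar>gz + cz\<bar> \<le> e"
    and fail: "fJy \<ge> fzx + (t/2) * gz"
    and loc: "fJy \<le> fJx + t*gJ + t*wt"
  shows False
proof -
  define th where "th = h / (8*G)"
  have th: "th > 0" using h G unfolding th_def by simp
  show False
  proof (cases "t \<le> th * r")
    case True
    have "t * (gJ + wt - gz/2) \<ge> fzx - fJx" using fail loc by (simp add: algebra_simps)
    then have tA: "t * (gJ + wt - gz/2) \<ge> 0" using act by linarith
    then have A: "gJ + wt - gz/2 \<ge> 0" using t by (simp add: zero_le_mult_iff)
    have X: "gJ + wt - gz/2 \<le> 1.5*G + 1.5*e" using gJG F3 wt h by auto
    have "t * (gJ + wt - gz/2) \<le> (th*r) * (gJ + wt - gz/2)"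
      using True A by (intro mult_right_mono) auto
    also have "\<dots> \<le> (th*r) * (1.5*G + 1.5*e)" using X th r by (intro mult_left_mono) auto
    finally have B: "fzx - fJx \<le> (th*r) * (1.5*G + 1.5*e)" using \<open>t * _ \<ge> fzx - fJx\<close> by linarith
    have "fzx - fJx \<ge> r*cz - r*cJ - 2*e*r" using F10 F1J aJ(1) by linarith
    then have "r * (cz - cJ) \<le> r * (th*(1.5*G + 1.5*e) + 2*e)" using B by (simp add: algebra_simps)
    then have C: "cz - cJ \<le> th*(1.5*G + 1.5*e) + 2*e" using r by simp
    have D: "cJ \<le> cz/2 + 2.5*e" using A F3 wt by linarith
    have "th*(1.5*G + 1.5*e) \<le> th*(2.5*G)" using th e G by (intro mult_left_mono) auto
    also have "\<dots> = 2.5*h/8" unfolding th_def using G by simp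
    finally show False using C D h e by linarith
  next
    case False
    have R: "aJ + (r - t)*cJ \<ge> (r - t/2)*cz - 4*e*r"
    proof -
      have "t * gz \<ge> t * (- cz - e)" using F3 t by (intro mult_left_mono) auto
      moreover have "t * e \<le> 4 * r * e" using t4 e by (intro mult_right_mono) auto
      ultimately show ?thesis using fail F2J F10 by (simp add: algebra_simps)
    qed
    show False
    proof (cases "aJ < 0")
      case True
      have "(r - t)*cJ \<le> \<bar>r - t\<bar> * \<bar>cJ\<bar>" by (metis abs_ge_self abs_mult)
      also have "\<dots> \<le> \<bar>r - t\<bar> * G" using cJG by (intro mult_left_mono) auto
      also have "\<dots> \<le> (3*r) * G" using t4 t r G by (intro mult_right_mono) auto
      finally have U: "(r - t)*cJ \<le> 3*r*G" .
      have L: "(r - t/2)*cz \<ge> - (e*r/2) * G"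
      proof (cases "r - t/2 \<ge> 0")
        case True
        have "(r - t/2)*cz \<ge> 0" using True h by simp
        moreover have "(e*r/2) * G \<ge> 0" using e r G by simp
        ultimately show ?thesis by linarith
      next
        case False
        have "(t/2 - r) * cz \<le> (e*r/2) * G" using t2 False h by (intro mult_mono) auto
        then show ?thesis by (simp add: algebra_simps)
      qed
      have "e*r/2*G \<le> r*G" using e r G by (simp add: mult_right_mono mult_le_cancel_left)
      moreover have "e*r \<le> r" using e r by simp
      ultimately have "- (e*r/2) * G \<ge> - (r*G)" "4*e*r \<le> 4*r" by auto
      moreover have "r*(4*G+5) = 4*(r*G) + 5*r" by (simp add: algebra_simps)
      moreover have "3*r*G = 3*(r*G)" by simp
      ultimately show False using R U L aJ(2)[OF True] r by linarith
    next
      case False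
      then have aJ0: "aJ = 0" using aJ(1) by simp
      have cJh: "cJ \<ge> h" using aJ(3)[OF aJ0] .
      have "r*cz + e*r \<ge> r*cJ - e*r" using act F10 F1J aJ0 by linarith
      then have "r * cz \<ge> r * (cJ - 2*e)" by (simp add: algebra_simps)
      then have c0J: "cz \<ge> cJ - 2*e" using r by simp
      show False
      proof (cases "t \<le> 2*r")
        case True
        have "(r - t/2)*cz \<ge> (r - t/2)*(cJ - 2*e)" using True c0J by (intro mult_left_mono) auto
        moreover have "(r - t/2)*(2*e) \<le> r*(2*e)" using t e by (intro mult_right_mono) auto
        ultimately have "(t/2)*cJ \<le> 6*e*r" using R aJ0 by (simp add: algebra_simps)
        moreover have "(th*r)*h \<le> t*cJ" using \<open>\<not> t \<le> th*r\<close> cJh h th r t by (intro mult_mono) auto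
        ultimately have "r * (th*h) \<le> r * (12*e)" by (simp add: algebra_simps)
        then have "th*h \<le> 12*e" using r by simp
        moreover have "th * h / 13 \<ge> e" using e(4) unfolding th_def by simp
        moreover have "th * h > 0" using th h by simp
        ultimately show False by linarith
      next
        case False
        have "(t - r)*cJ \<ge> r*h" using False cJh h r by (intro mult_mono) auto
        moreover have "(t/2 - r) * cz \<le> (e*r/2) * G" using t2 False h by (intro mult_mono) auto
        ultimately have "r*h \<le> (e*r/2)*G + 4*e*r" using R aJ0 by (simp add: algebra_simps)
        then have "r * h \<le> r * (e*(G/2 + 4))" by (simp add: algebra_simps)
        then have "h \<le> e*(G/2+4)" using r by simp
        moreover have "e*(G+9) \<le> h" using e(5) G by (simp add: field_simps)
        ultimately show False using e G by (simp add: algebra_simps)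
      qed
    qed
  qed
qed

context axs begin

lemma ev_lin:
  "\<forall>\<^sub>F t in at_right 0. \<forall>j\<in>{1..N}. f j x + t * (gf j x \<bullet> d) \<le> Ph x + t * DA x d"
proof (rule eventually_ball_finite[OF I_fin], intro ballI)
  fix j assume jI: "j \<in> {1..N}"
  show "\<forall>\<^sub>F t in at_right 0. f j x + t * (gf j x \<bullet> d) \<le> Ph x + t * DA x d"
  proof (cases "j \<in> Act x")
    case True
    then have "f j x = Ph x" "gf j x \<bullet> d \<le> DA x d" using DA_ge unfolding Act_def by auto
    then show ?thesis unfolding eventually_at_right_field
      by (intro exI[of _ 1]) (auto intro: mult_left_mono)
  next
    case False
    then have gap: "f j x < Ph x" using Ph_ge[OF jI, of x] jI unfolding Act_def by auto
    define c where "c = \<bar>gf j x \<bullet> d - DA x d\<bar> + 1"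
    have c: "c > 0" unfolding c_def by simp
    show ?thesis unfolding eventually_at_right_field
    proof (intro exI[of _ "(Ph x - f j x) / c"] conjI allI impI)
      show "0 < (Ph x - f j x) / c" using gap c by simp
      fix t :: real assume t: "0 < t" "t < (Ph x - f j x) / c"
      have "t * (gf j x \<bullet> d - DA x d) \<le> t * c" unfolding c_def using t by (intro mult_left_mono) auto
      also have "\<dots> < Ph x - f j x" using t c by (simp add: field_simps)
      finally show "f j x + t * (gf j x \<bullet> d) \<le> Ph x + t * DA x d" by (simp add: algebra_simps)
    qed
  qed
qed

lemma f_cont: "j \<in> {1..N} \<Longrightarrow> isCont (f j) y"
  using grad has_derivative_continuous by blast

lemma gf_cont: "j \<in> {1..N} \<Longrightarrow> isCont (gf j) y"
  using C1 continuous_on_eq_continuous_at open_UNIV by blast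

lemma Ph_tendsto:
  assumes "(y \<longlongrightarrow> z) F"
  shows "((\<lambda>i. Ph (y i)) \<longlongrightarrow> Ph z) F"
  unfolding Phi_def
  by (rule tendsto_Max_img[OF I_fin I_ne]) (auto intro: isCont_tendsto_compose[OF f_cont] assms)

lemma hq_tendsto:
  assumes "(y \<longlongrightarrow> z) F" "(q' \<longlongrightarrow> q) F"
  shows "((\<lambda>i. hq (y i) (q' i)) \<longlongrightarrow> hq z q) F"
proof -
  have "((\<lambda>i. Max ((\<lambda>j. f j (y i) + gf j (y i) \<bullet> q' i) ` {1..N})) \<longlongrightarrow> Max ((\<lambda>j. f j z + gf j z \<bullet> q) ` {1..N})) F"
  proof (rule tendsto_Max_img[OF I_fin I_ne])
    fix j assume j: "j \<in> {1..N}"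
    have a: "((\<lambda>i. f j (y i)) \<longlongrightarrow> f j z) F" by (rule isCont_tendsto_compose[OF f_cont[OF j] assms(1)])
    have b: "((\<lambda>i. gf j (y i)) \<longlongrightarrow> gf j z) F" by (rule isCont_tendsto_compose[OF gf_cont[OF j] assms(1)])
    show "((\<lambda>i. f j (y i) + gf j (y i) \<bullet> q' i) \<longlongrightarrow> f j z + gf j z \<bullet> q) F"
      by (intro tendsto_add tendsto_inner a b assms(2))
  qed
  moreover have "((\<lambda>i. 1/2 * (q' i \<bullet> q' i)) \<longlongrightarrow> 1/2 * (q \<bullet> q)) F"
    by (intro tendsto_mult tendsto_const tendsto_inner assms(2))
  ultimately show ?thesis unfolding hq_def by (rule tendsto_add)
qed

lemma hq0: "hq y 0 = Ph y"
  unfolding hq_def Phi_def by simp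

lemma hq_lower:
  assumes "\<And>j. j \<in> {1..N} \<Longrightarrow> norm (gf j y) \<le> G"
  shows "hq y q \<ge> Ph y - G * norm q"
proof -
  obtain j where j: "j \<in> {1..N}" "Ph y = f j y" using Ph_ex by blast
  have "gf j y \<bullet> q \<ge> - (norm (gf j y) * norm q)"
    using Cauchy_Schwarz_ineq2[of "gf j y" q] by linarith
  moreover have "norm (gf j y) * norm q \<le> G * norm q" using assms[OF j(1)] by (intro mult_right_mono) auto
  moreover have "f j y + gf j y \<bullet> q \<le> Max ((\<lambda>j. f j y + gf j y \<bullet> q) ` {1..N})"
    using j by (intro Max_img_ge[OF I_fin])
  moreover have "q \<bullet> q \<ge> 0" by simp
  ultimately show ?thesis unfolding hq_def using j by linarith
qed

end

locale run = axs f gf N w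
  for f :: "nat \<Rightarrow> real ^ 'n \<Rightarrow> real" and gf :: "nat \<Rightarrow> real ^ 'n \<Rightarrow> real ^ 'n"
    and N :: nat and w :: "real \<Rightarrow> real" +
  fixes x :: "nat \<Rightarrow> real ^ 'n" and L :: "nat \<Rightarrow> nat \<Rightarrow> real" and M :: real
    and xbar :: "real ^ 'n" and r :: "nat \<Rightarrow> nat"
  assumes opt: "\<And>k. qpopt (x k) (L k)"
    and st0: "\<And>k. (\<Sum>i=1..N. L k i *\<^sub>R gf i (x k)) = 0 \<Longrightarrow> x (Suc k) = x k"
    and st1: "\<And>k. (\<Sum>i=1..N. L k i *\<^sub>R gf i (x k)) \<noteq> 0 \<Longrightarrow>
      (\<exists>j. armijo f N (x k) ((1 / norm (- (\<Sum>i=1..N. L k i *\<^sub>R gf i (x k)))) *\<^sub>R (- (\<Sum>i=1..N. L k i *\<^sub>R gf i (x k)))) j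
         \<and> (\<forall>i<j. \<not> armijo f N (x k) ((1 / norm (- (\<Sum>i=1..N. L k i *\<^sub>R gf i (x k)))) *\<^sub>R (- (\<Sum>i=1..N. L k i *\<^sub>R gf i (x k)))) i)
         \<and> x (Suc k) = x k + ((1/2::real) ^ j) *\<^sub>R ((1 / norm (- (\<Sum>i=1..N. L k i *\<^sub>R gf i (x k)))) *\<^sub>R (- (\<Sum>i=1..N. L k i *\<^sub>R gf i (x k)))))"
    and H1: "\<And>j y. j \<in> {1..N} \<Longrightarrow> f j y \<ge> M"
    and rmono: "strict_mono r" and sublim: "(x \<circ> r) \<longlonglongrightarrow> xbar"
begin

definition pp where "pp k = - (\<Sum>i=1..N. L k i *\<^sub>R gf i (x k))"
definition dd where "dd k = (1 / norm (pp k)) *\<^sub>R pp k"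

lemma pp0: "pp k = 0 \<Longrightarrow> x (Suc k) = x k"
  using st0 unfolding pp_def by simp

lemma pp1: "pp k \<noteq> 0 \<Longrightarrow> \<exists>j. armijo f N (x k) (dd k) j \<and> (\<forall>i<j. \<not> armijo f N (x k) (dd k) i)
     \<and> x (Suc k) = x k + ((1/2::real) ^ j) *\<^sub>R dd k"
  using st1[of k] unfolding pp_def dd_def by simp

lemma dd_norm: "pp k \<noteq> 0 \<Longrightarrow> norm (dd k) = 1"
  unfolding dd_def by simp

lemma K2: "j \<in> {1..N} \<Longrightarrow> f j (x k) + gf j (x k) \<bullet> pp k \<le> Ph (x k) - pp k \<bullet> pp k"
  unfolding pp_def by (rule qp_K2[OF opt])

lemma SC: "hq (x k) q \<ge> hq (x k) (pp k) + 1/2 * ((q - pp k) \<bullet> (q - pp k))"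
  unfolding pp_def by (rule qp_SC[OF opt])

lemma DA_pp:
  assumes "pp k \<noteq> 0"
  shows "DA (x k) (dd k) \<le> - norm (pp k)"
proof -
  obtain J where J: "J \<in> Act (x k)" "DA (x k) (dd k) = gf J (x k) \<bullet> dd k" using DA_ex by blast
  have JI: "J \<in> {1..N}" and fJ: "f J (x k) = Ph (x k)" using J unfolding Act_def by auto
  have "gf J (x k) \<bullet> pp k \<le> - (pp k \<bullet> pp k)" using K2[OF JI, of k] fJ by simp
  also have "\<dots> = - (norm (pp k) * norm (pp k))" by (simp add: power2_norm_eq_inner[symmetric] power2_eq_square)
  finally have "gf J (x k) \<bullet> pp k / norm (pp k) \<le> - norm (pp k)"
    using assms by (simp add: divide_le_eq)
  then show ?thesis using J(2) unfolding dd_def by (simp add: inner_scaleR_right divide_inverse mult.commute)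
qed

lemma descent: "Ph (x (Suc k)) \<le> Ph (x k) - 1/2 * norm (x (Suc k) - x k) * norm (pp k)"
proof (cases "pp k = 0")
  case True then show ?thesis using pp0 by simp
next
  case False
  then obtain j where j: "armijo f N (x k) (dd k) j" "x (Suc k) = x k + ((1/2::real) ^ j) *\<^sub>R dd k"
    using pp1 by blast
  have "Ph (x (Suc k)) < Ph (x k) + 1/2 * (1/2) ^ j * DA (x k) (dd k)"
    using j unfolding armijo_def dirderiv_eq by simp
  also have "\<dots> \<le> Ph (x k) + 1/2 * (1/2) ^ j * (- norm (pp k))"
    using DA_pp[OF False] by (intro add_left_mono mult_left_mono) auto
  finally show ?thesis using j(2) dd_norm[OF False] by simp
qed

lemma Ph_step: "Ph (x (Suc k)) \<le> Ph (x k)"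
proof -
  have "0 \<le> 1/2 * norm (x (Suc k) - x k) * norm (pp k)" by simp
  then show ?thesis using descent[of k] by linarith
qed

lemma Ph_mono: "k \<le> m \<Longrightarrow> Ph (x m) \<le> Ph (x k)"
  by (induction m rule: dec_induct) (auto intro: order_trans[OF Ph_step])

lemma Ph_sub: "(\<lambda>i. Ph (x (r i))) \<longlonglongrightarrow> Ph xbar"
  using Ph_tendsto[OF sublim] by (simp add: o_def)

lemma Ph_ge_bar: "Ph (x k) \<ge> Ph xbar"
proof (rule tendsto_le[OF _ tendsto_const Ph_sub])
  show "\<forall>\<^sub>F i in sequentially. Ph (x (r i)) \<le> Ph (x k)"
    using eventually_ge_at_top[of k] 
  proof eventually_elim
    case (elim i) then show ?case using seq_suble[OF rmono, of i] by (intro Ph_mono) simp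
  qed
qed simp

lemma Ph_lim: "(\<lambda>k. Ph (x k)) \<longlonglongrightarrow> Ph xbar"
proof (rule LIMSEQ_I)
  fix e :: real assume e: "e > 0"
  from LIMSEQ_D[OF Ph_sub e] obtain i where i: "norm (Ph (x (r i)) - Ph xbar) < e" by blast
  show "\<exists>K. \<forall>k\<ge>K. norm (Ph (x k) - Ph xbar) < e"
  proof (intro exI allI impI)
    fix k assume "r i \<le> k"
    then have "Ph (x k) \<le> Ph (x (r i))" by (rule Ph_mono)
    then show "norm (Ph (x k) - Ph xbar) < e" using i Ph_ge_bar[of k] Ph_ge_bar[of "r i"] by simp
  qed
qed

end

locale nonstat = run f gf N w x L M xbar r
  for f :: "nat \<Rightarrow> real ^ 'n \<Rightarrow> real" and gf :: "nat \<Rightarrow> real ^ 'n \<Rightarrow> real ^ 'n"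
    and N :: nat and w :: "real \<Rightarrow> real" and x :: "nat \<Rightarrow> real ^ 'n" and L M and xbar :: "real ^ 'n" and r +
  fixes d0 :: "real ^ 'n"
  assumes neg: "DA xbar d0 < 0"
begin

lemma exq: "\<exists>q. hq xbar q < Ph xbar"
proof -
  obtain b where b: "b > 0" "\<And>t. 0 < t \<Longrightarrow> t < b \<Longrightarrow> \<forall>j\<in>{1..N}. f j xbar + t * (gf j xbar \<bullet> d0) \<le> Ph xbar + t * DA xbar d0"
    using ev_lin[of xbar d0] unfolding eventually_at_right_field by auto
  define D where "D = DA xbar d0"
  define S where "S = d0 \<bullet> d0"
  have D: "D < 0" using neg unfolding D_def by simp
  have S: "S \<ge> 0" unfolding S_def by simp
  define t where "t = min (b/2) (- D / (S + 1))"
  have "- D / (S + 1) > 0" using D S by (intro divide_pos_pos) auto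
  then have t: "t > 0" "t < b" "t \<le> - D / (S + 1)" using b unfolding t_def by auto
  have "Max ((\<lambda>j. f j xbar + gf j xbar \<bullet> (t *\<^sub>R d0)) ` {1..N}) \<le> Ph xbar + t * D"
    using b(2)[OF t(1,2)] unfolding D_def by (intro Max_img_le[OF I_fin I_ne]) auto
  moreover have "(t *\<^sub>R d0) \<bullet> (t *\<^sub>R d0) = t * (t * S)" unfolding S_def by simp
  moreover have "t * S \<le> - D"
  proof -
    have "t * S \<le> (- D / (S + 1)) * S" using t S by (intro mult_right_mono) auto
    also have "\<dots> \<le> - D" using D S by (simp add: field_simps)
    finally show ?thesis .
  qed
  then have "t * (t * S) \<le> t * (- D)" using t by (intro mult_left_mono) auto
  moreover have "t * D < 0" using t D by (simp add: mult_pos_neg)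
  ultimately have "hq xbar (t *\<^sub>R d0) < Ph xbar" unfolding hq_def S_def by (simp add: field_simps)
  then show ?thesis by blast
qed

definition G where "G = 1 + (\<Sum>j=1..N. norm (gf j xbar)) + w 1"

lemma G1: "G \<ge> 1"
  unfolding G_def using w_nonneg[of 1] by (simp add: sum_nonneg)

lemma gb: assumes j: "j \<in> {1..N}" and y: "norm (y - xbar) \<le> 1" shows "norm (gf j y) \<le> G"
proof -
  have "norm (gf j y) \<le> norm (gf j xbar) + norm (gf j y - gf j xbar)" by (metis norm_triangle_sub add.commute)
  also have "norm (gf j y - gf j xbar) \<le> w 1" using H2[OF j, of y xbar] wmono[of "norm (y - xbar)" 1] y by simp
  also have "norm (gf j xbar) \<le> (\<Sum>j=1..N. norm (gf j xbar))" using j by (intro member_le_sum) auto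
  finally show ?thesis unfolding G_def by simp
qed

lemma gb0: "j \<in> {1..N} \<Longrightarrow> norm (gf j xbar) \<le> G" using gb[of j xbar] by simp

lemma exrho: "\<exists>\<rho> \<beta> q. 0 < \<rho> \<and> \<rho> \<le> 1 \<and> \<beta> > 0 \<and> (\<forall>y. norm (y - xbar) < \<rho> \<longrightarrow> hq y q < Ph xbar - 2*\<beta> \<and> Ph y > Ph xbar - \<beta>)"
proof -
  obtain q where q: "hq xbar q < Ph xbar" using exq by blast
  define \<beta> where "\<beta> = (Ph xbar - hq xbar q) / 3"
  have \<beta>: "\<beta> > 0" using q unfolding \<beta>_def by simp
  have t1: "((\<lambda>y. hq y q) \<longlongrightarrow> hq xbar q) (at xbar)" by (rule hq_tendsto) auto
  have t2: "((\<lambda>y. Ph y) \<longlongrightarrow> Ph xbar) (at xbar)" by (rule Ph_tendsto) auto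
  have "\<forall>\<^sub>F y in at xbar. dist (hq y q) (hq xbar q) < \<beta>" using tendstoD[OF t1 \<beta>] .
  moreover have "\<forall>\<^sub>F y in at xbar. dist (Ph y) (Ph xbar) < \<beta>" using tendstoD[OF t2 \<beta>] .
  ultimately have "\<forall>\<^sub>F y in at xbar. dist (hq y q) (hq xbar q) < \<beta> \<and> dist (Ph y) (Ph xbar) < \<beta>"
    by eventually_elim auto
  then obtain d where d: "d > 0" "\<And>y. y \<noteq> xbar \<Longrightarrow> dist y xbar < d \<Longrightarrow> dist (hq y q) (hq xbar q) < \<beta> \<and> dist (Ph y) (Ph xbar) < \<beta>"
    unfolding eventually_at by auto
  have P: "hq y q < Ph xbar - 2*\<beta> \<and> Ph y > Ph xbar - \<beta>" if "norm (y - xbar) < min d 1" for y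
  proof (cases "y = xbar")
    case True then show ?thesis using \<beta> unfolding \<beta>_def by (simp add: field_simps)
  next
    case False
    then have "dist (hq y q) (hq xbar q) < \<beta> \<and> dist (Ph y) (Ph xbar) < \<beta>" using d that by (simp add: dist_norm)
    then have "hq y q - hq xbar q < \<beta>" "Ph xbar - Ph y < \<beta>" unfolding dist_real_def by (auto simp: abs_less_iff)
    moreover have "3 * \<beta> = Ph xbar - hq xbar q" unfolding \<beta>_def by simp
    ultimately show ?thesis by linarith
  qed
  show ?thesis using d \<beta> P by (intro exI[of _ "min d 1"] exI[of _ \<beta>] exI[of _ q]) auto
qed

end

locale ns2 = nonstat f gf N w x L M xbar r d0
  for f :: "nat \<Rightarrow> real ^ 'n \<Rightarrow> real" and gf :: "nat \<Rightarrow> real ^ 'n \<Rightarrow> real ^ 'n"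
    and N :: nat and w :: "real \<Rightarrow> real" and x :: "nat \<Rightarrow> real ^ 'n" and L M and xbar :: "real ^ 'n" and r
    and d0 :: "real ^ 'n" +
  fixes rho beta :: real and q0 :: "real ^ 'n"
  assumes rho: "0 < rho" "rho \<le> 1" and beta: "beta > 0"
    and ball: "\<And>y. norm (y - xbar) < rho \<Longrightarrow> hq y q0 < Ph xbar - 2*beta \<and> Ph y > Ph xbar - beta"
begin

definition eta where "eta = beta / G"

lemma eta: "eta > 0" unfolding eta_def using beta G1 by simp

lemma pp_big: assumes "norm (x k - xbar) < rho" shows "norm (pp k) > eta"
proof -
  have gk: "\<And>j. j \<in> {1..N} \<Longrightarrow> norm (gf j (x k)) \<le> G" using assms rho by (intro gb) auto
  have "0 \<le> 1/2 * ((q0 - pp k) \<bullet> (q0 - pp k))" by simp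
  then have "hq (x k) (pp k) \<le> hq (x k) q0" using SC[of k q0] by linarith
  also have "\<dots> < Ph xbar - 2*beta" using ball[OF assms] by simp
  also have "\<dots> < Ph (x k) - beta" using ball[OF assms] by simp
  finally have "Ph (x k) - G * norm (pp k) < Ph (x k) - beta" using hq_lower[OF gk, of "pp k"] by linarith
  then have "beta < G * norm (pp k)" by simp
  then show ?thesis unfolding eta_def using G1 by (simp add: divide_less_eq mult.commute)
qed

lemma pp_bnd: assumes "norm (x k - xbar) \<le> 1" shows "norm (pp k) \<le> 2 * G"
proof -
  have gk: "\<And>j. j \<in> {1..N} \<Longrightarrow> norm (gf j (x k)) \<le> G" using assms by (intro gb) auto
  have "hq (x k) 0 \<ge> hq (x k) (pp k) + 1/2 * ((0 - pp k) \<bullet> (0 - pp k))" by (rule SC)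
  then have "Ph (x k) \<ge> Ph (x k) - G * norm (pp k) + 1/2 * (norm (pp k) * norm (pp k))"
    using hq_lower[OF gk, of "pp k"] hq0 by (simp add: dot_square_norm power2_eq_square)
  then have "norm (pp k) * norm (pp k) \<le> (2 * G) * norm (pp k)" by simp
  show ?thesis
  proof (cases "norm (pp k) = 0")
    case True then show ?thesis using G1 by simp
  next
    case False
    then have "norm (pp k) > 0" by simp
    then show ?thesis using \<open>norm (pp k) * norm (pp k) \<le> (2 * G) * norm (pp k)\<close> by simp
  qed
qed

lemma exK: "\<exists>K. norm (x K - xbar) < rho / 3 \<and> Ph (x K) - Ph xbar < eta * rho / 6"
proof -
  have e1: "rho / 3 > 0" "eta * rho / 6 > 0" using rho eta by auto
  have "\<forall>\<^sub>F i in sequentially. dist ((x \<circ> r) i) xbar < rho / 3" using tendstoD[OF sublim e1(1)] .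
  moreover have "\<forall>\<^sub>F i in sequentially. dist (Ph (x (r i))) (Ph xbar) < eta * rho / 6" using tendstoD[OF Ph_sub e1(2)] .
  ultimately have "\<forall>\<^sub>F i in sequentially. dist ((x \<circ> r) i) xbar < rho / 3 \<and> dist (Ph (x (r i))) (Ph xbar) < eta * rho / 6"
    by eventually_elim auto
  then obtain i0 where "\<forall>i\<ge>i0. dist ((x \<circ> r) i) xbar < rho / 3 \<and> dist (Ph (x (r i))) (Ph xbar) < eta * rho / 6"
    unfolding eventually_sequentially by blast
  then have "dist ((x \<circ> r) i0) xbar < rho / 3" "dist (Ph (x (r i0))) (Ph xbar) < eta * rho / 6" by auto
  then obtain i where "dist ((x \<circ> r) i) xbar < rho / 3" "dist (Ph (x (r i))) (Ph xbar) < eta * rho / 6" by blast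
  moreover have "Ph (x (r i)) - Ph xbar \<le> dist (Ph (x (r i))) (Ph xbar)" by (simp add: dist_real_def)
  ultimately show ?thesis by (intro exI[of _ "r i"]) (auto simp: dist_norm)
qed

end

locale ns3 = ns2 f gf N w x L M xbar r d0 rho beta q0
  for f :: "nat \<Rightarrow> real ^ 'n \<Rightarrow> real" and gf :: "nat \<Rightarrow> real ^ 'n \<Rightarrow> real ^ 'n"
    and N :: nat and w :: "real \<Rightarrow> real" and x :: "nat \<Rightarrow> real ^ 'n" and L M and xbar :: "real ^ 'n" and r
    and d0 :: "real ^ 'n" and rho beta q0 +
  fixes K :: nat
  assumes K: "norm (x K - xbar) < rho / 3" "Ph (x K) - Ph xbar < eta * rho / 6"
begin

lemma stepb_gen: assumes "norm (x k - xbar) < rho"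
  shows "norm (x (Suc k) - x k) \<le> 2 * (Ph (x k) - Ph (x (Suc k))) / eta"
proof -
  have A: "norm (x (Suc k) - x k) * eta \<le> norm (x (Suc k) - x k) * norm (pp k)"
    using pp_big[OF assms] by (intro mult_left_mono) auto
  have "Ph (x (Suc k)) \<le> Ph (x k) - 1/2 * (norm (x (Suc k) - x k) * norm (pp k))"
    using descent[of k] by (simp add: mult.assoc)
  then have "norm (x (Suc k) - x k) * norm (pp k) \<le> 2 * (Ph (x k) - Ph (x (Suc k)))" by simp
  then have "norm (x (Suc k) - x k) * eta \<le> 2 * (Ph (x k) - Ph (x (Suc k)))" using A by linarith
  then show ?thesis using eta by (simp add: le_divide_eq)
qed

lemma inball_aux: "norm (x (K + i) - x K) \<le> 2 * (Ph (x K) - Ph (x (K + i))) / eta \<and> norm (x (K + i) - xbar) < rho"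
proof (induction i)
  case 0 then show ?case using K rho by simp
next
  case (Suc i)
  have s: "norm (x (Suc (K + i)) - x (K + i)) \<le> 2 * (Ph (x (K + i)) - Ph (x (Suc (K + i)))) / eta"
    using stepb_gen Suc by blast
  have "norm (x (K + Suc i) - x K) \<le> norm (x (K + i) - x K) + norm (x (Suc (K + i)) - x (K + i))"
    using norm_triangle_ineq[of "x (K + i) - x K" "x (Suc (K + i)) - x (K + i)"] by simp
  also have "\<dots> \<le> 2 * (Ph (x K) - Ph (x (K + i))) / eta + 2 * (Ph (x (K + i)) - Ph (x (Suc (K + i)))) / eta"
    using Suc s by linarith
  also have "\<dots> = (2 * (Ph (x K) - Ph (x (K + i))) + 2 * (Ph (x (K + i)) - Ph (x (Suc (K + i))))) / eta"
    by (rule add_divide_distrib[symmetric])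
  also have "\<dots> = 2 * (Ph (x K) - Ph (x (K + Suc i))) / eta" by (simp add: algebra_simps)
  finally have A: "norm (x (K + Suc i) - x K) \<le> 2 * (Ph (x K) - Ph (x (K + Suc i))) / eta" .
  have "2 * (Ph (x K) - Ph (x (K + Suc i))) / eta \<le> 2 * (Ph (x K) - Ph xbar) / eta"
    using Ph_ge_bar[of "K + Suc i"] eta by (intro divide_right_mono) auto
  also have "\<dots> < 2 * (eta * rho / 6) / eta"
  proof -
    have "2 * (Ph (x K) - Ph xbar) < 2 * (eta * rho / 6)" using K(2) by (simp add: mult.commute)
    then show ?thesis using divide_strict_right_mono eta by blast
  qed
  also have "\<dots> = rho / 3" using eta by simp
  finally have "norm (x (K + Suc i) - x K) < rho / 3" using A by linarith
  moreover have "norm (x (K + Suc i) - xbar) \<le> norm (x (K + Suc i) - x K) + norm (x K - xbar)"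
    using norm_triangle_ineq[of "x (K + Suc i) - x K" "x K - xbar"] by simp
  ultimately have "norm (x (K + Suc i) - xbar) < rho" using K(1) rho(1) by linarith
  then show ?case using A by simp
qed

lemma inball: "k \<ge> K \<Longrightarrow> norm (x k - xbar) < rho"
  using inball_aux[of "k - K"] by simp

lemma stepb: "k \<ge> K \<Longrightarrow> norm (x (Suc k) - x k) \<le> 2 * (Ph (x k) - Ph (x (Suc k))) / eta"
  using stepb_gen inball by blast

lemma ppK: "k \<ge> K \<Longrightarrow> pp k \<noteq> 0"
  using pp_big[OF inball] eta by force

lemma tele: "k \<ge> K \<Longrightarrow> norm (x (k + i) - x k) \<le> 2 * (Ph (x k) - Ph (x (k + i))) / eta"
proof (induction i)
  case 0 then show ?case by simp
next
  case (Suc i)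
  have s: "norm (x (Suc (k + i)) - x (k + i)) \<le> 2 * (Ph (x (k + i)) - Ph (x (Suc (k + i)))) / eta"
    using stepb Suc by simp
  have "norm (x (k + Suc i) - x k) \<le> norm (x (k + i) - x k) + norm (x (Suc (k + i)) - x (k + i))"
    using norm_triangle_ineq[of "x (k + i) - x k" "x (Suc (k + i)) - x (k + i)"] by simp
  also have "\<dots> \<le> 2 * (Ph (x k) - Ph (x (k + i))) / eta + 2 * (Ph (x (k + i)) - Ph (x (Suc (k + i)))) / eta"
    using Suc s by linarith
  also have "\<dots> = (2 * (Ph (x k) - Ph (x (k + i))) + 2 * (Ph (x (k + i)) - Ph (x (Suc (k + i))))) / eta"
    by (rule add_divide_distrib[symmetric])
  also have "\<dots> = 2 * (Ph (x k) - Ph (x (k + Suc i))) / eta" by (simp add: algebra_simps)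
  finally show ?case .
qed

lemma dist_bar: assumes "k \<ge> K" shows "norm (x k - xbar) \<le> 2 * (Ph (x k) - Ph xbar) / eta"
proof -
  have lo: "(\<lambda>i. norm (x (r i) - x k)) \<longlonglongrightarrow> norm (xbar - x k)"
    using sublim by (intro tendsto_intros) (simp add: o_def)
  have up: "(\<lambda>i. 2 * (Ph (x k) - Ph (x (r i))) / eta) \<longlonglongrightarrow> 2 * (Ph (x k) - Ph xbar) / eta"
    using Ph_sub eta by (intro tendsto_intros) auto
  have ev: "\<forall>\<^sub>F i in sequentially. norm (x (r i) - x k) \<le> 2 * (Ph (x k) - Ph (x (r i))) / eta"
    using eventually_ge_at_top[of k]
  proof eventually_elim
    case (elim i)
    then have "r i \<ge> k" using seq_suble[OF rmono, of i] by simp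
    then show ?case using tele[OF assms, of "r i - k"] by simp
  qed
  have "norm (xbar - x k) \<le> 2 * (Ph (x k) - Ph xbar) / eta"
    by (rule tendsto_le[OF trivial_limit_sequentially up lo ev])
  then show ?thesis by (simp add: norm_minus_commute)
qed

lemma xlim: "x \<longlonglongrightarrow> xbar"
proof -
  have "(\<lambda>k. x k - xbar) \<longlonglongrightarrow> 0"
  proof (rule Lim_null_comparison)
    show "\<forall>\<^sub>F k in sequentially. norm (x k - xbar) \<le> 2 * (Ph (x k) - Ph xbar) / eta"
      using eventually_ge_at_top[of K] by eventually_elim (rule dist_bar)
    show "(\<lambda>k. 2 * (Ph (x k) - Ph xbar) / eta) \<longlonglongrightarrow> 0"
      using Ph_lim eta by (auto intro!: tendsto_eq_intros)
  qed
  then show ?thesis by (simp add: LIM_zero_iff)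
qed

lemma alim: "(\<lambda>k. norm (x (Suc k) - x k)) \<longlonglongrightarrow> 0"
proof (rule Lim_null_comparison)
  show "\<forall>\<^sub>F k in sequentially. norm (norm (x (Suc k) - x k)) \<le> 2 * (Ph (x k) - Ph (x (Suc k))) / eta"
    using eventually_ge_at_top[of K]
  proof eventually_elim
    case (elim k)
    show ?case using stepb[OF elim] by simp
  qed
  have "(\<lambda>k. Ph (x (Suc k))) \<longlonglongrightarrow> Ph xbar" using Ph_lim by (rule LIMSEQ_Suc)
  then show "(\<lambda>k. 2 * (Ph (x k) - Ph (x (Suc k))) / eta) \<longlonglongrightarrow> 0"
    using Ph_lim eta by (auto intro!: tendsto_eq_intros)
qed

end

context axs begin

lemma hq_diff:
  "hq y q - hq z q \<le> (\<Sum>j=1..N. \<bar>f j y - f j z\<bar>) + (\<Sum>j=1..N. norm (gf j y - gf j z)) * norm q"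
proof -
  have "Max ((\<lambda>j. f j y + gf j y \<bullet> q) ` {1..N}) \<le> Max ((\<lambda>j. f j z + gf j z \<bullet> q) ` {1..N}) +
      ((\<Sum>j=1..N. \<bar>f j y - f j z\<bar>) + (\<Sum>j=1..N. norm (gf j y - gf j z)) * norm q)"
  proof (rule Max_img_diff[OF I_fin I_ne])
    fix j assume j: "j \<in> {1..N}"
    have a: "\<bar>f j y - f j z\<bar> \<le> (\<Sum>j=1..N. \<bar>f j y - f j z\<bar>)"
      using j by (intro member_le_sum) auto
    have b: "norm (gf j y - gf j z) \<le> (\<Sum>j=1..N. norm (gf j y - gf j z))"
      using j by (intro member_le_sum) auto
    have "gf j y \<bullet> q - gf j z \<bullet> q = (gf j y - gf j z) \<bullet> q" by (simp add: inner_diff_left)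
    also have "\<dots> \<le> norm (gf j y - gf j z) * norm q" by (rule norm_cauchy_schwarz)
    also have "\<dots> \<le> (\<Sum>j=1..N. norm (gf j y - gf j z)) * norm q" using b by (intro mult_right_mono) auto
    finally show "f j y + gf j y \<bullet> q \<le> f j z + gf j z \<bullet> q + ((\<Sum>j=1..N. \<bar>f j y - f j z\<bar>) + (\<Sum>j=1..N. norm (gf j y - gf j z)) * norm q)"
      using a by linarith
  qed
  then show ?thesis unfolding hq_def by simp
qed

lemma Ediff_lim:
  assumes "y \<longlonglongrightarrow> z"
  shows "(\<lambda>k. (\<Sum>j=1..N. \<bar>f j (y k) - f j z\<bar>) + (\<Sum>j=1..N. norm (gf j (y k) - gf j z)) * c) \<longlonglongrightarrow> 0"
proof -
  have "(\<lambda>k. (\<Sum>j=1..N. \<bar>f j (y k) - f j z\<bar>) + (\<Sum>j=1..N. norm (gf j (y k) - gf j z)) * c)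
     \<longlonglongrightarrow> (\<Sum>j=1..N. \<bar>f j z - f j z\<bar>) + (\<Sum>j=1..N. norm (gf j z - gf j z)) * c"
    by (intro tendsto_intros isCont_tendsto_compose[OF f_cont] isCont_tendsto_compose[OF gf_cont] assms) auto
  then show ?thesis by simp
qed

end

context ns3 begin

lemma stepdir: assumes "k \<ge> K" shows "x (Suc k) - x k = norm (x (Suc k) - x k) *\<^sub>R dd k" "norm (dd k) = 1"
proof -
  have p: "pp k \<noteq> 0" using ppK[OF assms] .
  then obtain j where j: "x (Suc k) = x k + ((1/2::real) ^ j) *\<^sub>R dd k" using pp1 by blast
  show "norm (dd k) = 1" using dd_norm[OF p] .
  then show "x (Suc k) - x k = norm (x (Suc k) - x k) *\<^sub>R dd k" using j by simp
qed

lemma ex_pbar: "\<exists>pbar. \<forall>q. hq xbar q \<ge> hq xbar pbar + 1/2 * ((q - pbar) \<bullet> (q - pbar))"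
proof -
  have "norm (pp (K + i)) \<le> 2 * G" for i
  proof -
    have "norm (x (K + i) - xbar) < rho" by (rule inball) simp
    then show ?thesis using rho by (intro pp_bnd) simp
  qed
  then have "bounded (range (\<lambda>i. pp (K + i)))"
    unfolding bounded_iff by auto
  then obtain l r2 where r2: "strict_mono r2" "((\<lambda>i. pp (K + i)) \<circ> r2) \<longlonglongrightarrow> l"
    using bounded_imp_convergent_subsequence by blast
  define s where "s i = K + r2 i" for i
  have s: "strict_mono s" using r2(1) unfolding s_def strict_mono_def by auto
  have xs: "(\<lambda>i. x (s i)) \<longlonglongrightarrow> xbar" using LIMSEQ_subseq_LIMSEQ[OF xlim s] by (simp add: o_def)
  have ps: "(\<lambda>i. pp (s i)) \<longlonglongrightarrow> l" using r2(2) by (simp add: o_def s_def)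
  have "hq xbar q \<ge> hq xbar l + 1/2 * ((q - l) \<bullet> (q - l))" for q
  proof (rule tendsto_le[OF trivial_limit_sequentially])
    show "(\<lambda>i. hq (x (s i)) q) \<longlonglongrightarrow> hq xbar q" by (rule hq_tendsto[OF xs tendsto_const])
    show "(\<lambda>i. hq (x (s i)) (pp (s i)) + 1/2 * ((q - pp (s i)) \<bullet> (q - pp (s i)))) \<longlonglongrightarrow> hq xbar l + 1/2 * ((q - l) \<bullet> (q - l))"
      by (intro tendsto_add tendsto_mult tendsto_const tendsto_inner tendsto_diff hq_tendsto[OF xs ps] ps)
    show "\<forall>\<^sub>F i in sequentially. hq (x (s i)) (pp (s i)) + 1/2 * ((q - pp (s i)) \<bullet> (q - pp (s i))) \<le> hq (x (s i)) q"
      by (intro always_eventually allI SC)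
  qed
  then show ?thesis by blast
qed

end

locale ns4 = ns3 f gf N w x L M xbar r d0 rho beta q0 K
  for f :: "nat \<Rightarrow> real ^ 'n \<Rightarrow> real" and gf :: "nat \<Rightarrow> real ^ 'n \<Rightarrow> real ^ 'n"
    and N :: nat and w :: "real \<Rightarrow> real" and x :: "nat \<Rightarrow> real ^ 'n" and L M and xbar :: "real ^ 'n" and r
    and d0 :: "real ^ 'n" and rho beta q0 K +
  fixes pbar :: "real ^ 'n"
  assumes SCbar: "\<And>q. hq xbar q \<ge> hq xbar pbar + 1/2 * ((q - pbar) \<bullet> (q - pbar))"
begin

lemma pp_lim: "pp \<longlonglongrightarrow> pbar"
proof -
  define E where "E k c = (\<Sum>j=1..N. \<bar>f j (x k) - f j xbar\<bar>) + (\<Sum>j=1..N. norm (gf j (x k) - gf j xbar)) * c" for k c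
  define E' where "E' k c = (\<Sum>j=1..N. \<bar>f j xbar - f j (x k)\<bar>) + (\<Sum>j=1..N. norm (gf j xbar - gf j (x k))) * c" for k c
  have EE: "E' k c = E k c" for k c unfolding E_def E'_def by (simp add: abs_minus_commute norm_minus_commute)
  have Ec: "E k c \<le> E k c'" if "c \<le> c'" for k c c'
    unfolding E_def using that by (intro add_left_mono mult_left_mono) (auto intro: sum_nonneg)
  have bnd: "norm (pp k - pbar) ^ 2 \<le> E k (norm pbar) + E k (2 * G)" if k: "k \<ge> K" for k
  proof -
    have a: "hq (x k) pbar \<ge> hq (x k) (pp k) + 1/2 * ((pbar - pp k) \<bullet> (pbar - pp k))" by (rule SC)
    have b: "hq xbar (pp k) \<ge> hq xbar pbar + 1/2 * ((pp k - pbar) \<bullet> (pp k - pbar))" by (rule SCbar)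
    have c: "hq (x k) pbar - hq xbar pbar \<le> E k (norm pbar)" using hq_diff unfolding E_def .
    have d: "hq xbar (pp k) - hq (x k) (pp k) \<le> E k (norm (pp k))" using hq_diff unfolding EE[symmetric] E'_def .
    have "norm (pp k) \<le> 2 * G" using pp_bnd inball[OF k] rho by (meson less_imp_le order_trans)
    then have d': "E k (norm (pp k)) \<le> E k (2 * G)" by (rule Ec)
    have "(pbar - pp k) \<bullet> (pbar - pp k) = norm (pp k - pbar) ^ 2"
      by (simp add: dot_square_norm norm_minus_commute)
    moreover have "(pp k - pbar) \<bullet> (pp k - pbar) = norm (pp k - pbar) ^ 2" by (simp add: dot_square_norm)
    ultimately show ?thesis using a b c d d' by linarith
  qed
  have lim0: "(\<lambda>k. sqrt (E k (norm pbar) + E k (2 * G))) \<longlonglongrightarrow> 0"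
  proof -
    have "(\<lambda>k. sqrt (E k (norm pbar) + E k (2 * G))) \<longlonglongrightarrow> sqrt (0 + 0)"
      unfolding E_def by (intro tendsto_intros Ediff_lim[OF xlim])
    then show ?thesis by simp
  qed
  have "(\<lambda>k. pp k - pbar) \<longlonglongrightarrow> 0"
  proof (rule Lim_null_comparison[OF _ lim0])
    show "\<forall>\<^sub>F k in sequentially. norm (pp k - pbar) \<le> sqrt (E k (norm pbar) + E k (2 * G))"
      using eventually_ge_at_top[of K]
    proof eventually_elim
      case (elim k)
      have "sqrt (norm (pp k - pbar) ^ 2) \<le> sqrt (E k (norm pbar) + E k (2 * G))"
        using bnd[OF elim] by (rule real_sqrt_le_mono)
      then show ?case by simp
    qed
  qed
  then show ?thesis by (simp add: LIM_zero_iff)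
qed

lemma pbar_big: "norm pbar \<ge> eta"
proof (rule tendsto_le[OF trivial_limit_sequentially])
  show "(\<lambda>k. norm (pp k)) \<longlonglongrightarrow> norm pbar" by (intro tendsto_intros pp_lim)
  show "(\<lambda>k. eta) \<longlonglongrightarrow> eta" by simp
  show "\<forall>\<^sub>F k in sequentially. eta \<le> norm (pp k)"
    using eventually_ge_at_top[of K] by eventually_elim (use pp_big inball in force)
qed

lemma pbar_ne: "pbar \<noteq> 0" using pbar_big eta by auto

definition dbar where "dbar = (1 / norm pbar) *\<^sub>R pbar"

lemma dbar_norm: "norm dbar = 1" unfolding dbar_def using pbar_ne by simp

lemma dd_lim: "dd \<longlonglongrightarrow> dbar"
  unfolding dd_def[abs_def] dbar_def using pbar_ne by (intro tendsto_intros pp_lim) auto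

lemma Kbar: assumes j: "j \<in> {1..N}" shows "f j xbar + gf j xbar \<bullet> pbar \<le> Ph xbar - pbar \<bullet> pbar"
proof (rule tendsto_le[OF trivial_limit_sequentially])
  show "(\<lambda>k. Ph (x k) - pp k \<bullet> pp k) \<longlonglongrightarrow> Ph xbar - pbar \<bullet> pbar"
    by (intro tendsto_intros Ph_lim pp_lim)
  show "(\<lambda>k. f j (x k) + gf j (x k) \<bullet> pp k) \<longlonglongrightarrow> f j xbar + gf j xbar \<bullet> pbar"
    by (intro tendsto_intros pp_lim isCont_tendsto_compose[OF f_cont[OF j] xlim] isCont_tendsto_compose[OF gf_cont[OF j] xlim])
  show "\<forall>\<^sub>F k in sequentially. f j (x k) + gf j (x k) \<bullet> pp k \<le> Ph (x k) - pp k \<bullet> pp k"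
    using K2[OF j] by simp
qed

definition cc where "cc j = - (gf j xbar \<bullet> dbar)"

lemma cc_act: assumes "j \<in> Act xbar" shows "cc j \<ge> norm pbar"
proof -
  have j: "j \<in> {1..N}" "f j xbar = Ph xbar" using assms unfolding Act_def by auto
  have "gf j xbar \<bullet> pbar \<le> - (pbar \<bullet> pbar)" using Kbar[OF j(1)] j(2) by simp
  also have "\<dots> = - (norm pbar * norm pbar)" by (simp add: dot_square_norm power2_eq_square)
  finally have "(gf j xbar \<bullet> pbar) / norm pbar \<le> - norm pbar" using pbar_ne by (simp add: divide_le_eq)
  then show ?thesis unfolding cc_def dbar_def by (simp add: inner_scaleR_right divide_inverse mult.commute)
qed

lemma cc_bnd: "j \<in> {1..N} \<Longrightarrow> \<bar>cc j\<bar> \<le> G"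
proof -
  assume j: "j \<in> {1..N}"
  have "\<bar>cc j\<bar> \<le> norm (gf j xbar) * norm dbar" unfolding cc_def using Cauchy_Schwarz_ineq2 by simp
  then show ?thesis using gb0[OF j] dbar_norm by simp
qed

end

lemma VA:
  fixes v d :: "'a::real_normed_vector"
  assumes "norm (v - S *\<^sub>R d) \<le> \<delta> * S" "norm d = 1" "0 \<le> \<delta>" "\<delta> \<le> 1/2" "S \<ge> 0"
  shows "norm (v - norm v *\<^sub>R d) \<le> 4 * \<delta> * norm v"
proof -
  have "\<bar>norm v - S\<bar> = \<bar>norm v - norm (S *\<^sub>R d)\<bar>" using assms by simp
  also have "\<dots> \<le> norm (v - S *\<^sub>R d)" by (rule norm_triangle_ineq3)
  finally have a: "\<bar>norm v - S\<bar> \<le> \<delta> * S" using assms(1) by linarith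
  have "norm (v - norm v *\<^sub>R d) \<le> norm (v - S *\<^sub>R d) + norm ((S - norm v) *\<^sub>R d)"
    using norm_triangle_ineq[of "v - S *\<^sub>R d" "(S - norm v) *\<^sub>R d"] by (simp add: algebra_simps)
  also have "norm ((S - norm v) *\<^sub>R d) = \<bar>norm v - S\<bar>" using assms(2) by simp
  finally have b: "norm (v - norm v *\<^sub>R d) \<le> 2 * (\<delta> * S)" using a assms(1) by linarith
  have "\<delta> * S \<le> (1/2) * S" using assms by (intro mult_right_mono) auto
  then have "S \<le> 2 * norm v" using a by linarith
  then have "\<delta> * S \<le> \<delta> * (2 * norm v)" using assms by (intro mult_left_mono) auto
  then show ?thesis using b by linarith
qed

context ns4 begin

lemma align: assumes e: "e > 0"
  shows "\<exists>K'. \<forall>k\<ge>K'. norm ((xbar - x k) - norm (xbar - x k) *\<^sub>R dbar) \<le> e * norm (xbar - x k)"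
proof -
  define \<delta> where "\<delta> = min (1/2) (e/4)"
  have \<delta>: "\<delta> > 0" "\<delta> \<le> 1/2" "4 * \<delta> \<le> e" using e unfolding \<delta>_def by auto
  obtain K1 where K1: "\<And>i. i \<ge> K1 \<Longrightarrow> norm (dd i - dbar) < \<delta>"
    using LIMSEQ_D[OF dd_lim \<delta>(1)] by blast
  have main: "norm ((xbar - x k) - norm (xbar - x k) *\<^sub>R dbar) \<le> e * norm (xbar - x k)"
    if k: "k \<ge> max K K1" for k
  proof -
    have S: "\<exists>S\<ge>0. norm (x (k + m) - x k - S *\<^sub>R dbar) \<le> \<delta> * S" for m
    proof (induction m)
      case 0 then show ?case by (intro exI[of _ 0]) simp
    next
      case (Suc m)
      then obtain S where S: "S \<ge> 0" "norm (x (k + m) - x k - S *\<^sub>R dbar) \<le> \<delta> * S" by blast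
      define a where "a = norm (x (Suc (k + m)) - x (k + m))"
      have km: "k + m \<ge> K" "k + m \<ge> K1" using k by auto
      have st: "x (Suc (k + m)) - x (k + m) = a *\<^sub>R dd (k + m)" using stepdir(1)[OF km(1)] unfolding a_def .
      have a0: "a \<ge> 0" unfolding a_def by simp
      have eq: "x (k + Suc m) - x k - (S + a) *\<^sub>R dbar = (x (k + m) - x k - S *\<^sub>R dbar) + a *\<^sub>R (dd (k + m) - dbar)"
        using st by (simp add: algebra_simps)
      have "norm (x (k + Suc m) - x k - (S + a) *\<^sub>R dbar) \<le> norm (x (k + m) - x k - S *\<^sub>R dbar) + norm (a *\<^sub>R (dd (k + m) - dbar))"
        unfolding eq by (rule norm_triangle_ineq)
      also have "norm (a *\<^sub>R (dd (k + m) - dbar)) = a * norm (dd (k + m) - dbar)" using a0 by simp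
      also have "a * norm (dd (k + m) - dbar) \<le> a * \<delta>" using K1[OF km(2)] a0 by (intro mult_left_mono) auto
      finally have "norm (x (k + Suc m) - x k - (S + a) *\<^sub>R dbar) \<le> \<delta> * (S + a)" using S by (simp add: algebra_simps)
      moreover have "S + a \<ge> 0" using S a0 by simp
      ultimately show ?case by blast
    qed
    have bnd: "norm ((x (m + k) - x k) - norm (x (m + k) - x k) *\<^sub>R dbar) \<le> e * norm (x (m + k) - x k)" for m
    proof -
      obtain S where "S \<ge> 0" "norm (x (k + m) - x k - S *\<^sub>R dbar) \<le> \<delta> * S" using S by blast
      then have "norm ((x (k + m) - x k) - norm (x (k + m) - x k) *\<^sub>R dbar) \<le> 4 * \<delta> * norm (x (k + m) - x k)"
        using \<delta> dbar_norm by (intro VA) auto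
      also have "\<dots> \<le> e * norm (x (k + m) - x k)" using \<delta> by (intro mult_right_mono) auto
      finally show ?thesis by (simp add: add.commute)
    qed
    have lim: "(\<lambda>m. x (m + k) - x k) \<longlonglongrightarrow> xbar - x k"
      by (intro tendsto_intros LIMSEQ_ignore_initial_segment[OF xlim])
    show ?thesis
    proof (rule tendsto_le[OF trivial_limit_sequentially])
      show "(\<lambda>m. e * norm (x (m + k) - x k)) \<longlonglongrightarrow> e * norm (xbar - x k)" by (intro tendsto_intros lim)
      show "(\<lambda>m. norm ((x (m + k) - x k) - norm (x (m + k) - x k) *\<^sub>R dbar)) \<longlonglongrightarrow> norm ((xbar - x k) - norm (xbar - x k) *\<^sub>R dbar)"
        by (intro tendsto_intros lim)
      show "\<forall>\<^sub>F m in sequentially. norm ((x (m + k) - x k) - norm (x (m + k) - x k) *\<^sub>R dbar) \<le> e * norm (x (m + k) - x k)"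
        using bnd by simp
    qed
  qed
  then show ?thesis by blast
qed

end

context ns4 begin

lemma contra: False
proof -
  define h where "h = norm pbar"
  have h: "h > 0" unfolding h_def using pbar_ne by simp
  have G0: "G > 0" using G1 by simp
  define e where "e = min (1/2) (min (h/25) (min ((h / (8*G)) * h / 13) (h / (G + 9))))"
  have "(h / (8*G)) * h / 13 > 0" "h / (G + 9) > 0" using h G1 by auto
  then have e: "e > 0" "e \<le> 1/2" "e \<le> h/25" "e \<le> (h / (8*G)) * h / 13" "e \<le> h / (G + 9)"
    unfolding e_def using h by (simp_all add: min_def)
  define ea where "ea = e / (3*G)"
  define \<delta> where "\<delta> = e / (12*G)"
  have ea: "ea > 0" "G * ea = e / 3" "ea \<le> 1" using e G1 unfolding ea_def by (auto simp: field_simps)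
  have dl: "\<delta> > 0" "G * \<delta> = e / 12" "\<delta> \<le> 1/2" "4 * \<delta> \<le> e" using e G1 unfolding \<delta>_def by (auto simp: field_simps)
  obtain dw where dw: "dw > 0" "\<And>t. 0 \<le> t \<Longrightarrow> t < dw \<Longrightarrow> w t < e / 15"
    using w_small[of "e/15"] e by auto
  obtain Ka where Ka: "\<And>k. k \<ge> Ka \<Longrightarrow> norm ((xbar - x k) - norm (xbar - x k) *\<^sub>R dbar) \<le> ea * norm (xbar - x k)"
    using align[OF ea(1)] by blast
  have ev1: "\<forall>\<^sub>F k in sequentially. k \<ge> max K Ka" by (rule eventually_ge_at_top)
  have ev2: "\<forall>\<^sub>F k in sequentially. dist (dd k) dbar < \<delta>" by (rule tendstoD[OF dd_lim dl(1)])
  have ev3: "\<forall>\<^sub>F k in sequentially. dist (x k) xbar < dw / 5" using dw by (intro tendstoD[OF xlim]) auto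
  have ev4: "\<forall>\<^sub>F k in sequentially. dist (norm (x (Suc k) - x k)) 0 < 1" by (rule tendstoD[OF alim]) simp
  have ev5: "\<forall>\<^sub>F k in sequentially. \<forall>j\<in>{1..N}. j \<notin> Act xbar \<longrightarrow> norm (xbar - x k) * (4*G+5) < Ph xbar - f j xbar"
  proof (rule eventually_ball_finite[OF I_fin], intro ballI)
    fix j assume j: "j \<in> {1..N}"
    show "\<forall>\<^sub>F k in sequentially. j \<notin> Act xbar \<longrightarrow> norm (xbar - x k) * (4*G+5) < Ph xbar - f j xbar"
    proof (cases "j \<in> Act xbar")
      case True then show ?thesis by simp
    next
      case False
      then have gap: "0 < Ph xbar - f j xbar" using Ph_ge[OF j, of xbar] j unfolding Act_def by auto
      have "(\<lambda>k. norm (xbar - x k) * (4*G+5)) \<longlonglongrightarrow> norm (xbar - xbar) * (4*G+5)"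
        by (intro tendsto_intros xlim)
      then have "\<forall>\<^sub>F k in sequentially. norm (xbar - x k) * (4*G+5) < Ph xbar - f j xbar"
        using gap by (intro order_tendstoD(2)) auto
      then show ?thesis by eventually_elim simp
    qed
  qed
  have "\<forall>\<^sub>F k in sequentially. k \<ge> max K Ka \<and> dist (dd k) dbar < \<delta> \<and> dist (x k) xbar < dw / 5 \<and>
      dist (norm (x (Suc k) - x k)) 0 < 1 \<and> (\<forall>j\<in>{1..N}. j \<notin> Act xbar \<longrightarrow> norm (xbar - x k) * (4*G+5) < Ph xbar - f j xbar)"
    using ev1 ev2 ev3 ev4 ev5 by eventually_elim blast
  then obtain k where k: "k \<ge> max K Ka" "dist (dd k) dbar < \<delta>" "dist (x k) xbar < dw / 5"
      "dist (norm (x (Suc k) - x k)) 0 < 1" "\<And>j. j\<in>{1..N} \<Longrightarrow> j \<notin> Act xbar \<Longrightarrow> norm (xbar - x k) * (4*G+5) < Ph xbar - f j xbar"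
    unfolding eventually_sequentially by (metis order_refl)
  define u where "u = xbar - x k"
  define R where "R = norm u"
  define \<alpha> where "\<alpha> = norm (x (Suc k) - x k)"
  have kK: "k \<ge> K" "k \<ge> Ka" "Suc k \<ge> Ka" using k(1) by auto
  have ddn: "norm (dd k) = 1" using stepdir(2)[OF kK(1)] .
  have dd\<delta>: "norm (dd k - dbar) \<le> \<delta>" using k(2) by (simp add: dist_norm)
  have R5: "5 * R < dw" using k(3) unfolding R_def u_def by (simp add: dist_norm norm_minus_commute)
  have R0: "R \<ge> 0" unfolding R_def by simp
  have \<alpha>1: "\<alpha> < 1" using k(4) unfolding \<alpha>_def by simp
  have R1: "norm (x k - xbar) \<le> 1" using inball[OF kK(1)] rho by simp
  have gk: "\<And>j. j \<in> {1..N} \<Longrightarrow> norm (gf j (x k)) \<le> G" using R1 gb by blast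
  have pk: "pp k \<noteq> 0" by (rule ppK[OF kK(1)])
  obtain jj where jj: "armijo f N (x k) (dd k) jj" "\<forall>i<jj. \<not> armijo f N (x k) (dd k) i"
      "x (Suc k) = x k + ((1/2::real) ^ jj) *\<^sub>R dd k"
    using pp1[OF pk] by blast
  have \<alpha>eq: "\<alpha> = (1/2) ^ jj" unfolding \<alpha>_def using jj(3) ddn by simp
  have jj0: "jj \<noteq> 0"
  proof
    assume "jj = 0" then show False using \<alpha>1 \<alpha>eq by simp
  qed
  have \<alpha>0: "\<alpha> > 0" using \<alpha>eq by simp
  define t where "t = 2 * \<alpha>"
  have t0: "t > 0" unfolding t_def using \<alpha>0 by simp
  have teq: "(1/2::real) ^ (jj - 1) = t"
  proof -
    obtain m where m: "jj = Suc m" using jj0 not0_implies_Suc by blast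
    show ?thesis unfolding t_def \<alpha>eq m by simp
  qed
  define y where "y = x k + t *\<^sub>R dd k"
  have fail: "Ph y \<ge> Ph (x k) + 1/2 * t * DA (x k) (dd k)"
    using jj(2)[rule_format, of "jj - 1"] jj0 unfolding armijo_def dirderiv_eq teq y_def by simp

  have dbn: "norm dbar = 1" "dbar \<bullet> dbar = 1" using dbar_norm by (auto simp: dot_square_norm)
  have ualign: "norm (u - R *\<^sub>R dbar) \<le> ea * R" using Ka[OF kK(2)] unfolding u_def R_def .
  define u' where "u' = xbar - x (Suc k)"
  have u'align: "norm (u' - norm u' *\<^sub>R dbar) \<le> ea * norm u'" using Ka[OF kK(3)] unfolding u'_def .
  have u'pos: "u' \<bullet> dbar \<ge> 0"
  proof -
    have "u' \<bullet> dbar = norm u' * (dbar \<bullet> dbar) + (u' - norm u' *\<^sub>R dbar) \<bullet> dbar"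
      by (simp add: inner_diff_left)
    moreover have "\<bar>(u' - norm u' *\<^sub>R dbar) \<bullet> dbar\<bar> \<le> norm (u' - norm u' *\<^sub>R dbar) * norm dbar"
      by (rule Cauchy_Schwarz_ineq2)
    moreover have "ea * norm u' \<le> 1 * norm u'" using ea by (intro mult_right_mono) auto
    ultimately show ?thesis using u'align dbn by (simp add: abs_le_iff)
  qed
  have ddd: "dd k \<bullet> dbar \<ge> 1 - \<delta>"
  proof -
    have "dd k \<bullet> dbar = dbar \<bullet> dbar + (dd k - dbar) \<bullet> dbar" by (simp add: inner_diff_left)
    moreover have "\<bar>(dd k - dbar) \<bullet> dbar\<bar> \<le> norm (dd k - dbar) * norm dbar" by (rule Cauchy_Schwarz_ineq2)
    ultimately show ?thesis using dbn dd\<delta> by (simp add: abs_le_iff; linarith?)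
  qed
  have ueq: "u = \<alpha> *\<^sub>R dd k + u'"
    using stepdir(1)[OF kK(1)] unfolding u_def u'_def \<alpha>_def by (simp add: algebra_simps)
  have "u \<bullet> dbar = \<alpha> * (dd k \<bullet> dbar) + u' \<bullet> dbar" unfolding ueq by (simp add: inner_add_left)
  moreover have "u \<bullet> dbar \<le> R" using Cauchy_Schwarz_ineq2[of u dbar] dbn unfolding R_def by (simp add: abs_le_iff)
  moreover have "\<alpha> * (1 - \<delta>) \<le> \<alpha> * (dd k \<bullet> dbar)" using ddd \<alpha>0 by (intro mult_left_mono) auto
  ultimately have aR: "\<alpha> * (1 - \<delta>) \<le> R" using u'pos by linarith
  have "\<alpha> * (1/2) \<le> \<alpha> * (1 - \<delta>)" using dl \<alpha>0 by (intro mult_left_mono) auto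
  then have t4: "t \<le> 4 * R" using aR unfolding t_def by linarith
  have "\<alpha> * \<delta> \<le> (2 * R) * \<delta>" using t4 dl unfolding t_def by (intro mult_right_mono) auto
  moreover have "(2 * R) * (4 * \<delta>) \<le> (2 * R) * e" using dl R0 by (intro mult_left_mono) auto
  ultimately have t2: "t \<le> 2 * R + e * R" using aR unfolding t_def by (simp add: algebra_simps; linarith?)
  have Rpos: "R > 0"
  proof -
    have "\<alpha> * (1 - \<delta>) > 0" using \<alpha>0 dl by simp
    then show ?thesis using aR by linarith
  qed
  have eR: "e * R > 0" using e Rpos by simp
  have wR: "w R \<le> e / 15" using dw(2)[of R] R0 R5 by simp
  have w5R: "w (5 * R) \<le> e / 15" using dw(2)[of "5 * R"] R0 R5 by simp
  have wt: "w t \<le> e / 15" "w t \<ge> 0" using dw(2)[of t] t0 t4 R5 w_nonneg[of t] by auto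
  have nxk: "norm (x k - xbar) = R" unfolding R_def u_def by (simp add: norm_minus_commute)
  have F1: "\<bar>f j (x k) - (f j xbar + R * cc j)\<bar> \<le> e * R" if j: "j \<in> {1..N}" for j
  proof -
    let ?g = "gf j xbar"
    have T: "\<bar>f j (x k) - f j xbar - ?g \<bullet> (x k - xbar)\<bar> \<le> R * w R"
      using taylor[OF j, of "x k" xbar] nxk by simp
    have "R * w R \<le> R * (e / 15)" using wR R0 by (intro mult_left_mono) auto
    moreover have "R * (e / 15) = (e * R) / 15" by simp
    ultimately have T': "\<bar>f j (x k) - f j xbar - ?g \<bullet> (x k - xbar)\<bar> \<le> (e * R) / 15" using T by linarith
    have xx: "x k - xbar = - (u - R *\<^sub>R dbar) - R *\<^sub>R dbar" unfolding u_def by simp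
    have eq: "?g \<bullet> (x k - xbar) = R * cc j - ?g \<bullet> (u - R *\<^sub>R dbar)"
      unfolding xx cc_def by (simp add: inner_diff_right)
    have "\<bar>?g \<bullet> (u - R *\<^sub>R dbar)\<bar> \<le> norm ?g * norm (u - R *\<^sub>R dbar)" by (rule Cauchy_Schwarz_ineq2)
    also have "\<dots> \<le> G * (ea * R)" using gb0[OF j] ualign G0 by (intro mult_mono) auto
    also have "\<dots> = (e * R) / 3" using ea(2) by (simp add: mult.assoc[symmetric])
    finally have X: "\<bar>?g \<bullet> (u - R *\<^sub>R dbar)\<bar> \<le> (e * R) / 3" .
    show ?thesis using T' X eR unfolding eq by (simp add: abs_le_iff; linarith?)
  qed
  have F2: "\<bar>f j y - (f j xbar + (R - t) * cc j)\<bar> \<le> e * R" if j: "j \<in> {1..N}" for j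
  proof -
    let ?g = "gf j xbar"
    have ny: "norm (y - xbar) \<le> 5 * R"
    proof -
      have "y - xbar = t *\<^sub>R dd k - u" unfolding y_def u_def by simp
      then have "norm (y - xbar) \<le> norm (t *\<^sub>R dd k) + norm u" by (metis norm_triangle_ineq4)
      then show ?thesis using ddn t0 t4 unfolding R_def by simp
    qed
    have T: "\<bar>f j y - f j xbar - ?g \<bullet> (y - xbar)\<bar> \<le> norm (y - xbar) * w (norm (y - xbar))"
      by (rule taylor[OF j])
    have "w (norm (y - xbar)) \<le> w (5 * R)" using ny by (intro wmono) auto
    then have "norm (y - xbar) * w (norm (y - xbar)) \<le> (5 * R) * (e / 15)"
      using ny w5R w_nonneg[of "norm (y - xbar)"] R0 by (intro mult_mono) auto
    moreover have "(5 * R) * (e / 15) = (e * R) / 3" by simp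
    ultimately have T': "\<bar>f j y - f j xbar - ?g \<bullet> (y - xbar)\<bar> \<le> (e * R) / 3" using T by linarith
    have yx: "y - xbar = t *\<^sub>R (dd k - dbar) + t *\<^sub>R dbar - (u - R *\<^sub>R dbar) - R *\<^sub>R dbar"
      unfolding y_def u_def by (simp add: algebra_simps)
    have eq: "?g \<bullet> (y - xbar) = (R - t) * cc j + t * (?g \<bullet> (dd k - dbar)) - ?g \<bullet> (u - R *\<^sub>R dbar)"
      unfolding yx cc_def by (simp add: inner_diff_right inner_add_right algebra_simps)
    have "\<bar>?g \<bullet> (u - R *\<^sub>R dbar)\<bar> \<le> norm ?g * norm (u - R *\<^sub>R dbar)" by (rule Cauchy_Schwarz_ineq2)
    also have "\<dots> \<le> G * (ea * R)" using gb0[OF j] ualign G0 by (intro mult_mono) auto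
    also have "\<dots> = (e * R) / 3" using ea(2) by (simp add: mult.assoc[symmetric])
    finally have X: "\<bar>?g \<bullet> (u - R *\<^sub>R dbar)\<bar> \<le> (e * R) / 3" .
    have "\<bar>t * (?g \<bullet> (dd k - dbar))\<bar> = t * \<bar>?g \<bullet> (dd k - dbar)\<bar>" using t0 by (simp add: abs_mult)
    also have "\<dots> \<le> (4 * R) * (G * \<delta>)"
    proof (rule mult_mono)
      have "\<bar>?g \<bullet> (dd k - dbar)\<bar> \<le> norm ?g * norm (dd k - dbar)" by (rule Cauchy_Schwarz_ineq2)
      also have "\<dots> \<le> G * \<delta>" using gb0[OF j] dd\<delta> G0 by (intro mult_mono) auto
      finally show "\<bar>?g \<bullet> (dd k - dbar)\<bar> \<le> G * \<delta>" .
    qed (use t4 R0 in auto)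
    also have "\<dots> = (e * R) / 3" using dl(2) by simp
    finally have Y: "\<bar>t * (?g \<bullet> (dd k - dbar))\<bar> \<le> (e * R) / 3" .
    show ?thesis using T' X Y eR unfolding eq by (simp add: abs_le_iff; linarith?)
  qed
  have F3: "\<bar>gf j (x k) \<bullet> dd k + cc j\<bar> \<le> e" if j: "j \<in> {1..N}" for j
  proof -
    have eq: "gf j (x k) \<bullet> dd k + cc j = (gf j (x k) - gf j xbar) \<bullet> dd k + gf j xbar \<bullet> (dd k - dbar)"
      unfolding cc_def by (simp add: inner_diff_left inner_diff_right)
    have "\<bar>(gf j (x k) - gf j xbar) \<bullet> dd k\<bar> \<le> norm (gf j (x k) - gf j xbar) * norm (dd k)" by (rule Cauchy_Schwarz_ineq2)
    also have "\<dots> \<le> w R" using H2[OF j, of "x k" xbar] nxk ddn by simp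
    finally have A: "\<bar>(gf j (x k) - gf j xbar) \<bullet> dd k\<bar> \<le> e / 15" using wR by linarith
    have "\<bar>gf j xbar \<bullet> (dd k - dbar)\<bar> \<le> norm (gf j xbar) * norm (dd k - dbar)" by (rule Cauchy_Schwarz_ineq2)
    also have "\<dots> \<le> G * \<delta>" using gb0[OF j] dd\<delta> G0 by (intro mult_mono) auto
    finally have B: "\<bar>gf j xbar \<bullet> (dd k - dbar)\<bar> \<le> e / 12" using dl(2) by simp
    show ?thesis unfolding eq using A B e by (simp add: abs_le_iff; linarith?)
  qed
  obtain j0 where j0: "j0 \<in> {1..N}" "Ph (x k) = f j0 (x k)" using Ph_ex by blast
  have j0k: "j0 \<in> Act (x k)" using j0 unfolding Act_def by simp
  obtain J where J: "J \<in> {1..N}" "Ph y = f J y" using Ph_ex by blast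
  have ccR: "R * cc j \<le> R * G" "R * cc j \<ge> - (R * G)" if "j \<in> {1..N}" for j
  proof -
    have "\<bar>R * cc j\<bar> \<le> R * G" using cc_bnd[OF that] R0 by (simp add: abs_mult mult_left_mono)
    then show "R * cc j \<le> R * G" "R * cc j \<ge> - (R * G)" by (simp_all add: abs_le_iff)
  qed
  have j0A: "j0 \<in> Act xbar"
  proof (rule ccontr)
    assume na: "j0 \<notin> Act xbar"
    have gap: "R * (4*G+5) < Ph xbar - f j0 xbar" using k(5)[OF j0(1) na] unfolding R_def u_def .
    obtain i where i: "i \<in> Act xbar" using Act_ne by blast
    have iI: "i \<in> {1..N}" and fi: "f i xbar = Ph xbar" using i unfolding Act_def by auto
    have "f i (x k) \<le> f j0 (x k)" using Ph_ge[OF iI, of "x k"] j0 by simp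
    moreover have "R * (4*G+5) = 4 * (R * G) + 5 * R" by (simp add: algebra_simps)
    moreover have "e * R \<le> R" using e R0 by (simp add: mult_right_le_one_le mult.commute)
    ultimately show False using F1[OF iI] F1[OF j0(1)] ccR[OF iI] ccR[OF j0(1)] gap fi Rpos
      by (simp add: abs_le_iff; linarith?)
  qed
  have fj0: "f j0 xbar = Ph xbar" using j0A unfolding Act_def by simp
  show False
  proof (rule FA[where r = R and t = t and G = G and e = e and h = h and cz = "cc j0" and cJ = "cc J"
      and aJ = "f J xbar - Ph xbar" and fzx = "f j0 (x k)" and fJx = "f J (x k)" and fJy = "f J y"
      and gJ = "gf J (x k) \<bullet> dd k" and gz = "gf j0 (x k) \<bullet> dd k" and wt = "w t" and P = "Ph xbar"])
    show "R > 0" by (rule Rpos)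
    show "t > 0" by (rule t0)
    show "G \<ge> 1" by (rule G1)
    show "h > 0" by (rule h)
    show "h \<le> cc j0" using cc_act[OF j0A] unfolding h_def .
    show "cc j0 \<le> G" using cc_bnd[OF j0(1)] by simp
    show "\<bar>cc J\<bar> \<le> G" by (rule cc_bnd[OF J(1)])
    show "\<bar>gf J (x k) \<bullet> dd k\<bar> \<le> G"
      using Cauchy_Schwarz_ineq2[of "gf J (x k)" "dd k"] gk[OF J(1)] ddn by simp
    show "0 \<le> w t" "w t \<le> e" using wt e by auto
    show "e > 0" "e \<le> 1/2" "e \<le> h/25" "e \<le> (h / (8*G)) * h / 13" "e \<le> h / (G + 9)" using e by auto
    show "t \<le> 2*R + e*R" by (rule t2)
    show "t \<le> 4*R" by (rule t4)
    show "f J (x k) \<le> f j0 (x k)" using Ph_ge[OF J(1), of "x k"] j0 by simp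
    show "\<bar>f j0 (x k) - (Ph xbar + R * cc j0)\<bar> \<le> e * R" using F1[OF j0(1)] fj0 by simp
    show "\<bar>f J (x k) - (Ph xbar + (f J xbar - Ph xbar) + R * cc J)\<bar> \<le> e * R" using F1[OF J(1)] by simp
    show "\<bar>f J y - (Ph xbar + (f J xbar - Ph xbar) + (R - t) * cc J)\<bar> \<le> e * R" using F2[OF J(1)] by simp
    show "f J xbar - Ph xbar \<le> 0" using Ph_ge[OF J(1)] by simp
    show "f J xbar - Ph xbar < - R * (4*G+5)" if "f J xbar - Ph xbar < 0"
    proof -
      have "J \<notin> Act xbar" using that unfolding Act_def by auto
      then show ?thesis using k(5)[OF J(1)] unfolding R_def u_def by simp
    qed
    show "cc J \<ge> h" if "f J xbar - Ph xbar = 0"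
    proof -
      have "J \<in> Act xbar" using that J(1) unfolding Act_def by auto
      then show ?thesis using cc_act unfolding h_def by blast
    qed
    show "\<bar>gf J (x k) \<bullet> dd k + cc J\<bar> \<le> e" by (rule F3[OF J(1)])
    show "\<bar>gf j0 (x k) \<bullet> dd k + cc j0\<bar> \<le> e" by (rule F3[OF j0(1)])
    show "f J y \<ge> f j0 (x k) + (t/2) * (gf j0 (x k) \<bullet> dd k)"
    proof -
      have "(t/2) * (gf j0 (x k) \<bullet> dd k) \<le> (t/2) * DA (x k) (dd k)"
        using DA_ge[OF j0k] t0 by (intro mult_left_mono) auto
      then show ?thesis using fail J(2) j0(2) by simp
    qed
    show "f J y \<le> f J (x k) + t * (gf J (x k) \<bullet> dd k) + t * w t"
    proof -
      have "\<bar>f J y - f J (x k) - gf J (x k) \<bullet> (y - x k)\<bar> \<le> norm (y - x k) * w (norm (y - x k))"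
        by (rule taylor[OF J(1)])
      moreover have "y - x k = t *\<^sub>R dd k" unfolding y_def by simp
      moreover have "norm (t *\<^sub>R dd k) = t" using t0 ddn by simp
      ultimately show ?thesis by (simp add: abs_le_iff)
    qed
  qed
qed

end

theorem theorem6:
  fixes f :: "nat \<Rightarrow> real ^ 'n \<Rightarrow> real"
    and gf :: "nat \<Rightarrow> real ^ 'n \<Rightarrow> real ^ 'n"
    and N :: nat and M :: real and w :: "real \<Rightarrow> real"
    and x :: "nat \<Rightarrow> real ^ 'n" and xbar :: "real ^ 'n"
  assumes N: "N \<ge> 1"
    and H1: "\<And>j y. j \<in> {1..N} \<Longrightarrow> f j y \<ge> M"
    and grad: "\<And>j y. j \<in> {1..N} \<Longrightarrow> (f j has_derivative (\<lambda>h. gf j y \<bullet> h)) (at y)"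
    and C1: "\<And>j. j \<in> {1..N} \<Longrightarrow> continuous_on UNIV (gf j)"
    and w_mono: "mono_on {0..} w"
    and w_nonneg: "\<And>t. t \<ge> 0 \<Longrightarrow> w t \<ge> 0"
    and w0: "w 0 = 0"
    and w_cont: "continuous (at 0 within {0..}) w"
    and H2: "\<And>j y z. j \<in> {1..N} \<Longrightarrow> norm (gf j y - gf j z) \<le> w (norm (y - z))"
    and x0: "x 0 = 0"
    and step: "\<And>k. algX_step f gf N (x k) (x (Suc k))"
    and acc: "\<exists>r. strict_mono r \<and> (x \<circ> r) \<longlonglongrightarrow> xbar"
  shows "\<forall>d. dirderiv (Phi f N) xbar d \<ge> 0"
proof (rule ccontr)
  assume "\<not> (\<forall>d. dirderiv (Phi f N) xbar d \<ge> 0)"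
  then obtain d0 where d0: "dirderiv (Phi f N) xbar d0 < 0" by (auto simp: not_le)
  interpret axs f gf N w
    using N grad w_mono w_nonneg w0 w_cont H2 C1 by unfold_locales auto
  have neg: "DA xbar d0 < 0" using d0 dirderiv_eq by simp
  obtain r where r: "strict_mono r" "(x \<circ> r) \<longlonglongrightarrow> xbar" using acc by blast
  have "\<forall>k. \<exists>l. qpopt (x k) l \<and>
     (let p = - (\<Sum>j=1..N. l j *\<^sub>R gf j (x k));
          d = (if p = 0 then 0 else (1 / norm p) *\<^sub>R p)
      in if d = 0 then x (Suc k) = x k + 1 *\<^sub>R d
         else (\<exists>j. armijo f N (x k) d j \<and> (\<forall>i<j. \<not> armijo f N (x k) d i)
                  \<and> x (Suc k) = x k + ((1/2::real) ^ j) *\<^sub>R d))"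
    using step unfolding algX_step_def qpopt_def by blast
  from choice[OF this] obtain L where L0: "\<forall>k. qpopt (x k) (L k) \<and>
     (let p = - (\<Sum>j=1..N. L k j *\<^sub>R gf j (x k));
          d = (if p = 0 then 0 else (1 / norm p) *\<^sub>R p)
      in if d = 0 then x (Suc k) = x k + 1 *\<^sub>R d
         else (\<exists>j. armijo f N (x k) d j \<and> (\<forall>i<j. \<not> armijo f N (x k) d i)
                  \<and> x (Suc k) = x k + ((1/2::real) ^ j) *\<^sub>R d))" ..
  note L = L0[rule_format]
  interpret run f gf N w x L M xbar r
  proof unfold_locales
    fix k
    show "qpopt (x k) (L k)" using L[of k] by blast
    show "(\<Sum>i=1..N. L k i *\<^sub>R gf i (x k)) = 0 \<Longrightarrow> x (Suc k) = x k"
      using L[of k] by (simp add: Let_def)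
    assume ne: "(\<Sum>i=1..N. L k i *\<^sub>R gf i (x k)) \<noteq> 0"
    then have "(1 / norm (- (\<Sum>i=1..N. L k i *\<^sub>R gf i (x k)))) *\<^sub>R (- (\<Sum>i=1..N. L k i *\<^sub>R gf i (x k))) \<noteq> 0"
      by simp
    then show "\<exists>j. armijo f N (x k) ((1 / norm (- (\<Sum>i=1..N. L k i *\<^sub>R gf i (x k)))) *\<^sub>R (- (\<Sum>i=1..N. L k i *\<^sub>R gf i (x k)))) j
         \<and> (\<forall>i<j. \<not> armijo f N (x k) ((1 / norm (- (\<Sum>i=1..N. L k i *\<^sub>R gf i (x k)))) *\<^sub>R (- (\<Sum>i=1..N. L k i *\<^sub>R gf i (x k)))) i)
         \<and> x (Suc k) = x k + ((1/2::real) ^ j) *\<^sub>R ((1 / norm (- (\<Sum>i=1..N. L k i *\<^sub>R gf i (x k)))) *\<^sub>R (- (\<Sum>i=1..N. L k i *\<^sub>R gf i (x k))))"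
      using L[of k] ne by (simp add: Let_def)
  next
    show "\<And>j y. j \<in> {1..N} \<Longrightarrow> f j y \<ge> M" by (rule H1)
    show "strict_mono r" by (rule r(1))
    show "(x \<circ> r) \<longlonglongrightarrow> xbar" by (rule r(2))
  qed
  interpret nonstat f gf N w x L M xbar r d0
    by unfold_locales (rule neg)
  obtain rho beta q0 where rb: "0 < rho" "rho \<le> 1" "beta > 0"
      "\<And>y. norm (y - xbar) < rho \<Longrightarrow> hq y q0 < Ph xbar - 2*beta \<and> Ph y > Ph xbar - beta"
    using exrho by blast
  interpret ns2 f gf N w x L M xbar r d0 rho beta q0
    using rb by unfold_locales auto
  obtain K where K: "norm (x K - xbar) < rho / 3" "Ph (x K) - Ph xbar < eta * rho / 6"
    using exK by blast
  interpret ns3 f gf N w x L M xbar r d0 rho beta q0 K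
    using K by unfold_locales auto
  obtain pbar where pbar: "\<And>q. hq xbar q \<ge> hq xbar pbar + 1/2 * ((q - pbar) \<bullet> (q - pbar))"
    using ex_pbar by blast
  interpret ns4 f gf N w x L M xbar r d0 rho beta q0 K pbar
    using pbar by unfold_locales auto
  show False by (rule contra)
qed

end
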